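(* For every integer $a\ge1$ and $p\ge0$ the function $\kappa_{p,a}$ is differentiable on $[H_-,H_+]$, and for every $a\ge1$ there exists a constant $c_a$ such that $\sup_{p\ge0}|\kappa_{p,a}'(H)|\le c_a$ for all $H\in[H_-,H_+]$.
   Context: $0<H_-\le H_+<3/4$. For $H\in(0,1)$, $W^H$ denotes a two-sided fractional Brownian motion with Hurst index $H$. For $p\ge0$, $l\in\mathbb Z$, $s\ge1$ and $\mathbf r=(r_1,\dots,r_s)$ positive integers with $|\mathbf r|=\sum r_i$, $\mathbf r!=\prod r_i!$, let $\mathfrak W^{H,\mathbf r}_{p,l}=\int_0^1W^H_{(l+u)2^{-p}}du$ if $|\mathbf r|=1$, and $\mathfrak W^{H,\mathbf r}_{p,l}=\frac1{\mathbf r!}\int_{[0,1]^s}\prod_{i=1}^s(W^H_{(l+u_i)2^{-p}}-W^H_{l2^{-p}})^{r_i}du$ if $|\mathbf r|\ge2$. For $a\ge1$, $$\kappa_{p,a}(H)=2^{-2p}\sum_{|l|<2^p}(2^p-|l|)\sum\frac{(-1)^{s_1+s_2}}{s_1s_2}\mathbb E\big[(\mathfrak W^{H,\mathbf r^1}_{p,2^p}-\mathfrak W^{H,\mathbf r^1}_{p,0})(\mathfrak W^{H,\mathbf r^2}_{p,2^p+l}-\mathfrak W^{H,\mathbf r^2}_{p,l})\big],$$ the inner sum being over $b_1,b_2\ge1$ with $b_1+b_2=2a$, $s_1,s_2\ge1$, $\mathbf r^i\in\{1,2,\dots\}^{s_i}$ with $|\mathbf r^i|=b_i$. *)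

theory Defs
  imports "HOL-Probability.Probability"
begin

definition fbm_cov :: "real \<Rightarrow> real \<Rightarrow> real \<Rightarrow> real" where
  "fbm_cov H s t = (\<bar>s\<bar> powr (2*H) + \<bar>t\<bar> powr (2*H) - \<bar>t - s\<bar> powr (2*H)) / 2"

text \<open>W is a two-sided fractional Brownian motion with Hurst index H on the probability
  space M: a centred Gaussian process (characterised through the joint characteristic
  functions of all finite families) with the fBm covariance and continuous sample paths.\<close>
definition is_fBM :: "'a measure \<Rightarrow> real \<Rightarrow> (real \<Rightarrow> 'a \<Rightarrow> real) \<Rightarrow> bool" where
  "is_fBM M H W \<longleftrightarrow> prob_space M \<and> (\<forall>t. W t \<in> borel_measurable M)
     \<and> (\<forall>\<omega>\<in>space M. continuous_on UNIV (\<lambda>t. W t \<omega>))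
     \<and> (\<forall>(n::nat) (t::nat \<Rightarrow> real) (c::nat \<Rightarrow> real).
          integral\<^sup>L M (\<lambda>\<omega>. cis (\<Sum>k<n. c k * W (t k) \<omega>))
          = complex_of_real (exp (- (1/2) * (\<Sum>j<n. \<Sum>k<n. c j * c k * fbm_cov H (t j) (t k)))))"

text \<open>The functionals \<open>\<frakW>^{H,r}_{p,l}\<close>; the multi-index r is a nonempty list of positive
  integers, s = length r, |r| = sum_list r, r! = product of factorials.\<close>
definition frakW :: "(real \<Rightarrow> 'a \<Rightarrow> real) \<Rightarrow> nat \<Rightarrow> int \<Rightarrow> nat list \<Rightarrow> 'a \<Rightarrow> real" where
  "frakW W p l r \<omega> =
    (if sum_list r = 1 then
       set_lebesgue_integral lborel {0..1} (\<lambda>u. W ((of_int l + u) * 2 powr (- real p)) \<omega>)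
     else
       (1 / real (prod_list (map fact r))) *
       set_lebesgue_integral (PiM {..<length r} (\<lambda>_. lborel)) (PiE {..<length r} (\<lambda>_. {0..1}))
         (\<lambda>u. \<Prod>i<length r. (W ((of_int l + u i) * 2 powr (- real p)) \<omega>
                                 - W (of_int l * 2 powr (- real p)) \<omega>) ^ (r ! i)))"

text \<open>Index set of the inner sum: pairs of multi-indices (r1, r2), each a nonempty list of
  positive integers, with |r1| + |r2| = 2a (then b_i = |r_i| \<ge> 1, s_i = length r_i \<ge> 1).\<close>
definition kappa_idx :: "nat \<Rightarrow> (nat list \<times> nat list) set" where
  "kappa_idx a = {(r1, r2). r1 \<noteq> [] \<and> r2 \<noteq> [] \<and> (\<forall>x\<in>set r1. x \<ge> 1) \<and> (\<forall>x\<in>set r2. x \<ge> 1)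
                    \<and> sum_list r1 + sum_list r2 = 2 * a}"

definition kappa :: "(real \<Rightarrow> 'a measure) \<Rightarrow> (real \<Rightarrow> real \<Rightarrow> 'a \<Rightarrow> real) \<Rightarrow> nat \<Rightarrow> nat \<Rightarrow> real \<Rightarrow> real" where
  "kappa M W p a H =
    2 powr (- 2 * real p) *
    (\<Sum>l\<in>{- (2^p - 1) .. 2^p - 1 :: int}. (2^p - \<bar>of_int l\<bar>) *
      (\<Sum>(r1, r2)\<in>kappa_idx a.
         (-1) ^ (length r1 + length r2) / (real (length r1) * real (length r2)) *
         integral\<^sup>L (M H) (\<lambda>\<omega>. (frakW (W H) p (2^p) r1 \<omega> - frakW (W H) p 0 r1 \<omega>)
                           * (frakW (W H) p (2^p + l) r2 \<omega> - frakW (W H) p l r2 \<omega>))))"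

end

theory Submission
  imports Defs
begin

lemma char_distr_eq:
  assumes "prob_space M" and [measurable]: "Z \<in> borel_measurable M"
  shows "char (distr M lborel Z) s = integral\<^sup>L M (\<lambda>\<omega>. cis (s * Z \<omega>))"
  unfolding char_def by (subst integral_distr) (auto simp: cis_conv_exp)

definition qform :: "real \<Rightarrow> 'b set \<Rightarrow> ('b \<Rightarrow> real) \<Rightarrow> ('b \<Rightarrow> real) \<Rightarrow> real" where
  "qform H K d t = (\<Sum>j\<in>K. \<Sum>k\<in>K. d j * d k * fbm_cov H (t j) (t k))"

lemma fbm_char_general:
  assumes fbm: "is_fBM M H W" and fin: "finite K"
  shows "integral\<^sup>L M (\<lambda>\<omega>. cis (\<Sum>k\<in>K. d k * W (t k) \<omega>))
       = complex_of_real (exp (- (1/2) * qform H K d t))"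
proof -
  obtain h where h: "bij_betw h {0..<card K} K" using ex_bij_betw_nat_finite[OF fin] by blast
  have eq1: "(\<Sum>k\<in>K. d k * W (t k) \<omega>) = (\<Sum>i<card K. (d \<circ> h) i * W ((t \<circ> h) i) \<omega>)" for \<omega>
    using sum.reindex_bij_betw[OF h, of "\<lambda>k. d k * W (t k) \<omega>"] by (simp add: atLeast0LessThan)
  have eq2: "qform H K d t = (\<Sum>j<card K. \<Sum>k<card K. (d \<circ> h) j * (d \<circ> h) k * fbm_cov H ((t \<circ> h) j) ((t \<circ> h) k))"
    unfolding qform_def
    using sum.reindex_bij_betw[OF h, of "\<lambda>j. \<Sum>k\<in>K. d j * d k * fbm_cov H (t j) (t k)"]
          sum.reindex_bij_betw[OF h, of "\<lambda>k. d _ * d k * fbm_cov H (t _) (t k)"]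
    by (simp add: atLeast0LessThan)
  show ?thesis unfolding eq1 eq2 using fbm unfolding is_fBM_def by blast
qed

lemma qform_scale: "qform H K (\<lambda>k. s * d k) t = s^2 * qform H K d t"
  unfolding qform_def by (simp add: sum_distrib_left power2_eq_square algebra_simps)

lemma fbm_gauss_moment:
  fixes d t :: "'b \<Rightarrow> real"
  assumes fbm: "is_fBM M H W" and fin: "finite K"
  defines "Z \<equiv> (\<lambda>\<omega>. \<Sum>k\<in>K. d k * W (t k) \<omega>)"
  shows "integrable M (\<lambda>\<omega>. Z \<omega> ^ (2*a))"
    and "integral\<^sup>L M (\<lambda>\<omega>. Z \<omega> ^ (2*a)) = qform H K d t ^ a * (fact (2*a) / (2^a * fact a))"
    and "qform H K d t \<ge> 0"
proof -
  interpret prob_space M using fbm unfolding is_fBM_def by blast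
  have Wm[measurable]: "W s \<in> borel_measurable M" for s using fbm unfolding is_fBM_def by blast
  have Zm[measurable]: "Z \<in> borel_measurable M" unfolding Z_def by measurable
  let ?q = "qform H K d t"
  have ch: "char (distr M lborel Z) s = complex_of_real (exp (- (1/2) * (s^2 * ?q)))" for s
  proof -
    have "char (distr M lborel Z) s = integral\<^sup>L M (\<lambda>\<omega>. cis (s * Z \<omega>))"
      by (rule char_distr_eq) (auto intro: prob_space_axioms)
    also have "(\<lambda>\<omega>. s * Z \<omega>) = (\<lambda>\<omega>. \<Sum>k\<in>K. (s * d k) * W (t k) \<omega>)"
      unfolding Z_def by (simp add: sum_distrib_left mult.assoc)
    finally show ?thesis using fbm_char_general[OF fbm fin, of "\<lambda>k. s * d k" t] qform_scale by simp
  qed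
  have rd: "real_distribution (distr M lborel Z)"
    by (auto simp: real_distribution_def real_distribution_axioms_def intro!: prob_space_distr)
  have "norm (char (distr M lborel Z) 1) \<le> 1"
    using real_distribution.cmod_char_le_1[OF rd] .
  then have "exp (- (1/2) * ?q) \<le> 1" using ch[of 1] by simp
  then show qpos: "?q \<ge> 0" by simp
  have "integrable M (\<lambda>\<omega>. Z \<omega> ^ (2*a)) \<and> integral\<^sup>L M (\<lambda>\<omega>. Z \<omega> ^ (2*a)) = ?q ^ a * (fact (2*a) / (2^a * fact a))"
  proof (cases "?q = 0")
    case True
    have rd0: "real_distribution (return lborel (0::real))"
      by (auto simp: real_distribution_def real_distribution_axioms_def intro!: prob_space_return)
    have "char (distr M lborel Z) = char (return lborel 0)"
      using ch True by (auto simp: fun_eq_iff char_def integral_return)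
    then have D: "distr M lborel Z = return lborel 0" using Levy_uniqueness[OF rd rd0] by blast
    have "integrable (distr M lborel Z) (\<lambda>x. x ^ (2*a))" unfolding D
      by (subst integrable_iff_bounded) (simp add: nn_integral_return)
    then have i: "integrable M (\<lambda>\<omega>. Z \<omega> ^ (2*a))" by (simp add: integrable_distr_eq)
    have "integral\<^sup>L M (\<lambda>\<omega>. Z \<omega> ^ (2*a)) = integral\<^sup>L (distr M lborel Z) (\<lambda>x. x ^ (2*a))"
      by (simp add: integral_distr)
    also have "\<dots> = 0 ^ (2*a)" unfolding D by (simp add: integral_return)
    finally show ?thesis using i True by (cases a) auto
  next
    case False
    with qpos have qp: "?q > 0" by simp
    define \<sigma> where "\<sigma> = sqrt ?q"
    have sp: "\<sigma> > 0" using qp by (simp add: \<sigma>_def)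
    have s2: "\<sigma>^2 = ?q" using qpos by (simp add: \<sigma>_def)
    let ?Y = "\<lambda>\<omega>. Z \<omega> / \<sigma>"
    have rdY: "real_distribution (distr M lborel ?Y)"
      by (auto simp: real_distribution_def real_distribution_axioms_def intro!: prob_space_distr)
    have "char (distr M lborel ?Y) s = char (distr M lborel Z) (s / \<sigma>)" for s
      by (simp add: char_distr_eq[OF prob_space_axioms] field_simps)
    also have "\<dots> s = char std_normal_distribution s" for s
      unfolding ch char_std_normal_distribution using sp s2 qp by (simp add: field_simps power2_eq_square)
    finally have D: "distr M lborel ?Y = std_normal_distribution"
      using Levy_uniqueness[OF rdY real_dist_normal_dist] by blast
    have iY: "integrable M (\<lambda>\<omega>. ?Y \<omega> ^ (2*a))"
      using std_normal_distribution_even_moments(2)[of a] unfolding D[symmetric]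
      by (simp add: integrable_distr_eq)
    have eY: "integral\<^sup>L M (\<lambda>\<omega>. ?Y \<omega> ^ (2*a)) = fact (2*a) / (2^a * fact a)"
      using std_normal_distribution_even_moments(1)[of a] unfolding D[symmetric]
      by (simp add: integral_distr)
    have eqZ: "(\<lambda>\<omega>. Z \<omega> ^ (2*a)) = (\<lambda>\<omega>. \<sigma>^(2*a) * ?Y \<omega> ^ (2*a))"
      using sp by (simp add: fun_eq_iff power_divide)
    have "\<sigma>^(2*a) = ?q^a" by (simp add: power_mult s2)
    then show ?thesis unfolding eqZ using iY eY by simp
  qed
  then show "integrable M (\<lambda>\<omega>. Z \<omega> ^ (2*a))"
    and "integral\<^sup>L M (\<lambda>\<omega>. Z \<omega> ^ (2*a)) = ?q ^ a * (fact (2*a) / (2^a * fact a))" by auto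
qed

definition polD :: "(nat \<Rightarrow> real) \<Rightarrow> nat \<Rightarrow> nat \<Rightarrow> real" where
  "polD y n k = (\<Sum>S\<in>Pow {..<n}. (-1)^(n - card S) * (\<Sum>i\<in>S. y i)^k)"

lemma polD_Suc: "polD y (Suc n) k = (\<Sum>j<k. real (k choose j) * y n ^ (k - j) * polD y n j)"
proof -
  have P: "Pow {..<Suc n} = Pow {..<n} \<union> insert n ` Pow {..<n}"
    by (simp add: lessThan_Suc Pow_insert)
  have disj: "Pow {..<n} \<inter> insert n ` Pow {..<n} = {}" by auto
  have inj: "inj_on (insert n) (Pow {..<n})"
    unfolding inj_on_def by (metis Pow_iff insert_Diff1 lessThan_iff less_irrefl subsetD Diff_insert_absorb)
  have fin: "finite (Pow {..<n})" by simp
  have A: "(\<Sum>S\<in>insert n ` Pow {..<n}. (-1::real)^(Suc n - card S) * (\<Sum>i\<in>S. y i)^k)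
       = (\<Sum>S\<in>Pow {..<n}. (-1)^(n - card S) * (y n + (\<Sum>i\<in>S. y i))^k)"
  proof (subst sum.reindex[OF inj], intro sum.cong refl)
    fix S assume S: "S \<in> Pow {..<n}"
    then have nS: "n \<notin> S" by auto
    have fS: "finite S" using S finite_subset by auto
    show "((\<lambda>S. (-1::real)^(Suc n - card S) * (\<Sum>i\<in>S. y i)^k) \<circ> insert n) S
          = (-1)^(n - card S) * (y n + (\<Sum>i\<in>S. y i))^k"
      using nS fS by (simp add: card_insert_if)
  qed
  have B: "(\<Sum>S\<in>Pow {..<n}. (-1::real)^(Suc n - card S) * (\<Sum>i\<in>S. y i)^k)
       = - (\<Sum>S\<in>Pow {..<n}. (-1)^(n - card S) * (\<Sum>i\<in>S. y i)^k)"
  proof -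
    have "(-1::real)^(Suc n - card S) = - ((-1)^(n - card S))" if "S \<in> Pow {..<n}" for S
    proof -
      have "card S \<le> n" using that card_mono[of "{..<n}" S] by auto
      then have "Suc n - card S = Suc (n - card S)" by simp
      then show ?thesis by simp
    qed
    then show ?thesis unfolding sum_negf[symmetric] by (intro sum.cong refl) auto
  qed
  have bin: "(y n + s)^k - s^k = (\<Sum>j<k. real (k choose j) * y n ^ (k - j) * s^j)" for s
  proof -
    have "(y n + s)^k = (\<Sum>j\<le>k. real (k choose j) * s^j * y n ^ (k - j))"
      by (subst add.commute) (rule binomial_ring)
    also have "\<dots> = (\<Sum>j<k. real (k choose j) * s^j * y n ^ (k - j)) + s^k"
      by (simp add: lessThan_Suc_atMost[symmetric])
    finally show ?thesis by (simp add: algebra_simps)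
  qed
  have "polD y (Suc n) k = (\<Sum>S\<in>Pow {..<n}. (-1)^(n - card S) * ((y n + (\<Sum>i\<in>S. y i))^k - (\<Sum>i\<in>S. y i)^k))"
  proof -
    have "polD y (Suc n) k = (\<Sum>S\<in>Pow {..<n}. (-1::real)^(Suc n - card S) * (\<Sum>i\<in>S. y i)^k)
       + (\<Sum>S\<in>insert n ` Pow {..<n}. (-1::real)^(Suc n - card S) * (\<Sum>i\<in>S. y i)^k)"
      unfolding polD_def P by (rule sum.union_disjoint) auto
    also have "\<dots> = (\<Sum>S\<in>Pow {..<n}. (-1)^(n - card S) * (y n + (\<Sum>i\<in>S. y i))^k)
        - (\<Sum>S\<in>Pow {..<n}. (-1)^(n - card S) * (\<Sum>i\<in>S. y i)^k)"
      unfolding A B by simp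
    also have "\<dots> = (\<Sum>S\<in>Pow {..<n}. (-1)^(n - card S) * ((y n + (\<Sum>i\<in>S. y i))^k - (\<Sum>i\<in>S. y i)^k))"
      by (simp add: sum_subtractf right_diff_distrib)
    finally show ?thesis .
  qed
  also have "\<dots> = (\<Sum>S\<in>Pow {..<n}. \<Sum>j<k. (-1)^(n - card S) * (real (k choose j) * y n ^ (k - j) * (\<Sum>i\<in>S. y i)^j))"
    by (simp add: bin sum_distrib_left)
  also have "\<dots> = (\<Sum>j<k. \<Sum>S\<in>Pow {..<n}. (-1)^(n - card S) * (real (k choose j) * y n ^ (k - j) * (\<Sum>i\<in>S. y i)^j))"
    by (rule sum.swap)
  also have "\<dots> = (\<Sum>j<k. real (k choose j) * y n ^ (k - j) * polD y n j)"
    unfolding polD_def by (simp add: sum_distrib_left algebra_simps)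
  finally show ?thesis .
qed

lemma polD_main: "k \<le> n \<Longrightarrow> polD y n k = (if k < n then 0 else fact n * (\<Prod>i<n. y i))"
proof (induction n arbitrary: k)
  case 0
  then show ?case by (simp add: polD_def)
next
  case (Suc n)
  have "polD y (Suc n) k = (\<Sum>j<k. real (k choose j) * y n ^ (k - j) * polD y n j)"
    by (rule polD_Suc)
  also have "\<dots> = (\<Sum>j<k. if j = n then real (k choose j) * y n ^ (k - j) * (fact n * (\<Prod>i<n. y i)) else 0)"
    using Suc by (intro sum.cong refl) auto
  also have "\<dots> = (if k < Suc n then 0 else fact (Suc n) * (\<Prod>i<Suc n. y i))"
  proof (cases "k < Suc n")
    case True then show ?thesis by simp
  next
    case False
    then have k: "k = Suc n" using Suc.prems by simp
    show ?thesis unfolding k by (simp add: algebra_simps)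
  qed
  finally show ?case .
qed

lemma polarization:
  fixes y :: "nat \<Rightarrow> real"
  shows "(\<Prod>i<n. y i) = (\<Sum>S\<in>Pow {..<n}. (-1)^(n - card S) * (\<Sum>i\<in>S. y i)^n) / fact n"
  using polD_main[of n n y] by (simp add: polD_def)

lemma deriv_integral:
  fixes \<Phi> \<Phi>' :: "real \<Rightarrow> 'b \<Rightarrow> real" and S :: "real set"
  assumes fm: "finite_measure N" and cS: "convex S"
    and mP: "\<And>H. H \<in> S \<Longrightarrow> \<Phi> H \<in> borel_measurable N"
    and mD: "\<And>H. H \<in> S \<Longrightarrow> \<Phi>' H \<in> borel_measurable N"
    and iP: "\<And>H. H \<in> S \<Longrightarrow> integrable N (\<Phi> H)"
    and dP: "\<And>H x. H \<in> S \<Longrightarrow> x \<in> space N \<Longrightarrow> ((\<lambda>H. \<Phi> H x) has_real_derivative \<Phi>' H x) (at H within S)"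
    and bD: "\<And>H x. H \<in> S \<Longrightarrow> x \<in> space N \<Longrightarrow> \<bar>\<Phi>' H x\<bar> \<le> K"
    and H: "H \<in> S"
  shows "((\<lambda>H. integral\<^sup>L N (\<Phi> H)) has_real_derivative integral\<^sup>L N (\<Phi>' H)) (at H within S)"
proof -
  interpret finite_measure N by (rule fm)
  show ?thesis unfolding has_field_derivative_iff tendsto_at_iff_sequentially
  proof (intro allI impI)
    fix X :: "nat \<Rightarrow> real" assume XS: "\<forall>i. X i \<in> S - {H}" and XH: "X \<longlonglongrightarrow> H"
    let ?s = "\<lambda>i x. (\<Phi> (X i) x - \<Phi> H x) / (X i - H)"
    have ne: "X i \<noteq> H" "X i \<in> S" for i using XS by auto
    have lip: "\<bar>\<Phi> (X i) x - \<Phi> H x\<bar> \<le> K * \<bar>X i - H\<bar>" if x: "x \<in> space N" for i x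
      using field_differentiable_bound[OF cS, of "\<lambda>H. \<Phi> H x" "\<lambda>H. \<Phi>' H x" K, OF dP[OF _ x]] bD[OF _ x] ne H
      by auto
    have lim: "(\<lambda>i. integral\<^sup>L N (?s i)) \<longlonglongrightarrow> integral\<^sup>L N (\<Phi>' H)"
    proof (rule integral_dominated_convergence[where w="\<lambda>_. K"])
      show "\<Phi>' H \<in> borel_measurable N" using mD[OF H] .
      show "?s i \<in> borel_measurable N" for i using mP[OF H] mP[OF ne(2)] by measurable
      show "integrable N (\<lambda>_. K)" by simp
      show "AE x in N. (\<lambda>i. ?s i x) \<longlonglongrightarrow> \<Phi>' H x"
      proof (rule AE_I2)
        fix x assume x: "x \<in> space N"
        have "((\<lambda>y. (\<Phi> y x - \<Phi> H x) / (y - H)) \<longlongrightarrow> \<Phi>' H x) (at H within S)"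
          using dP[OF H x] unfolding has_field_derivative_iff .
        then show "(\<lambda>i. ?s i x) \<longlonglongrightarrow> \<Phi>' H x"
          unfolding tendsto_at_iff_sequentially comp_def using XS XH by blast
      qed
      show "AE x in N. norm (?s i x) \<le> K" for i
      proof (rule AE_I2)
        fix x assume x: "x \<in> space N"
        have "\<bar>X i - H\<bar> > 0" using ne by simp
        then show "norm (?s i x) \<le> K" using lip[OF x, of i]
          by (simp add: abs_divide divide_le_eq)
      qed
    qed
    have eq: "integral\<^sup>L N (?s i) = (integral\<^sup>L N (\<Phi> (X i)) - integral\<^sup>L N (\<Phi> H)) / (X i - H)" for i
      using Bochner_Integration.integral_diff[OF iP[OF ne(2)] iP[OF H]] by simp
    show "((\<lambda>y. (integral\<^sup>L N (\<Phi> y) - integral\<^sup>L N (\<Phi> H)) / (y - H)) \<circ> X) \<longlonglongrightarrow> integral\<^sup>L N (\<Phi>' H)"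
      using lim unfolding eq comp_def .
  qed
qed

definition dpow :: "real \<Rightarrow> real \<Rightarrow> real" where
  "dpow H x = 2 * ln x * x powr (2*H)"

definition dcov :: "real \<Rightarrow> real \<Rightarrow> real \<Rightarrow> real" where
  "dcov H s t = (dpow H \<bar>s\<bar> + dpow H \<bar>t\<bar> - dpow H \<bar>t - s\<bar>) / 2"

lemma dpow_deriv:
  assumes "x \<ge> 0"
  shows "((\<lambda>H. x powr (2*H)) has_real_derivative dpow H x) (at H within S)"
proof (cases "x = 0")
  case True
  then show ?thesis by (simp add: dpow_def)
next
  case False
  then have xp: "x > 0" using assms by simp
  have eq: "(\<lambda>H. x powr (2*H)) = (\<lambda>H. exp (2 * H * ln x))" using xp by (simp add: powr_def fun_eq_iff)
  show ?thesis unfolding eq dpow_def using xp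
    by (auto intro!: derivative_eq_intros simp: powr_def)
qed

lemma cov_deriv: "((\<lambda>H. fbm_cov H s t) has_real_derivative dcov H s t) (at H within S)"
  unfolding fbm_cov_def[abs_def] dcov_def
  by (intro DERIV_cdivide DERIV_diff DERIV_add dpow_deriv) auto

lemma powr_le16:
  fixes x H :: real
  assumes "0 \<le> x" "x \<le> 4" "0 \<le> H" "H \<le> 1"
  shows "x powr (2*H) \<le> 16"
proof (cases "x \<le> 1")
  case True
  then have "x powr (2*H) \<le> 1 powr (2*H)" using assms by (intro powr_mono2) auto
  then show ?thesis by simp
next
  case False
  then have "x powr (2*H) \<le> x powr 2" using assms by (intro powr_mono) auto
  also have "\<dots> = x^2" using False by (simp add: powr_realpow)
  also have "\<dots> \<le> 4^2" using assms by (intro power_mono) auto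
  finally show ?thesis by simp
qed

lemma ln_powr_bound:
  fixes x e :: real
  assumes "0 < x" "x < 1" "0 < e"
  shows "- ln x * x powr e \<le> 1 / e"
proof -
  have "e * ln (1/x) \<le> exp (e * ln (1/x))" using exp_ge_add_one_self[of "e * ln (1/x)"] by linarith
  also have "exp (e * ln (1/x)) = (1/x) powr e" using assms by (simp add: powr_def)
  also have "\<dots> = 1 / x powr e" using assms by (simp add: powr_divide)
  finally have "e * (- ln x) \<le> 1 / x powr e" using assms by (simp add: ln_div)
  then have "e * (- ln x) * x powr e \<le> 1" using assms by (simp add: field_simps)
  then show ?thesis using assms by (simp add: field_simps)
qed

lemma dpow_bound:
  assumes "0 \<le> x" "x \<le> 4" "0 < Hm" "Hm \<le> H" "H \<le> 1"
  shows "\<bar>dpow H x\<bar> \<le> 1 / Hm + 128"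
proof -
  consider "x = 0" | "0 < x" "x < 1" | "1 \<le> x" using assms by linarith
  then show ?thesis
  proof cases
    case 1 then show ?thesis using assms by (simp add: dpow_def)
  next
    case 2
    have "x powr (2*H) \<le> x powr (2*Hm)" using 2 assms by (intro powr_mono') auto
    then have "- ln x * x powr (2*H) \<le> - ln x * x powr (2*Hm)" using 2 by (intro mult_left_mono) auto
    also have "\<dots> \<le> 1 / (2*Hm)" using ln_powr_bound[OF 2, of "2*Hm"] assms by simp
    finally have "\<bar>dpow H x\<bar> \<le> 1 / Hm" using 2 by (simp add: dpow_def abs_mult)
    then show ?thesis by simp
  next
    case 3
    have l: "0 \<le> ln x" "ln x \<le> 3" using 3 assms ln_le_minus_one[of x] by auto
    have p: "x powr (2*H) \<le> 16" "0 \<le> x powr (2*H)" using powr_le16[of x H] assms by auto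
    have "\<bar>dpow H x\<bar> = 2 * ln x * x powr (2*H)" using l p by (simp add: dpow_def abs_mult)
    also have "\<dots> \<le> 2 * 3 * 16" using l p by (intro mult_mono) auto
    finally show ?thesis using assms by (simp add: add_increasing)
  qed
qed

lemma abs3: "\<bar>a::real\<bar> \<le> k \<Longrightarrow> \<bar>b\<bar> \<le> k \<Longrightarrow> \<bar>c\<bar> \<le> k \<Longrightarrow> \<bar>(a + b - c) / 2\<bar> \<le> 2 * k"
  by (auto simp: abs_le_iff)

lemma cov_bound:
  assumes "\<bar>s\<bar> \<le> 2" "\<bar>t\<bar> \<le> 2" "0 \<le> H" "H \<le> 1"
  shows "\<bar>fbm_cov H s t\<bar> \<le> 32"
proof -
  have "\<bar>t - s\<bar> \<le> 4" using assms by linarith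
  then have "\<bar>s\<bar> powr (2*H) \<le> 16" "\<bar>t\<bar> powr (2*H) \<le> 16" "\<bar>t - s\<bar> powr (2*H) \<le> 16"
    using powr_le16 assms by auto
  then show ?thesis unfolding fbm_cov_def using abs3[of _ 16] by fastforce
qed

lemma dcov_bound:
  assumes "\<bar>s\<bar> \<le> 2" "\<bar>t\<bar> \<le> 2" "0 < Hm" "Hm \<le> H" "H \<le> 1"
  shows "\<bar>dcov H s t\<bar> \<le> 2 * (1 / Hm + 128)"
proof -
  have "\<bar>t - s\<bar> \<le> 4" using assms by linarith
  then have "\<bar>dpow H \<bar>s\<bar>\<bar> \<le> 1 / Hm + 128" "\<bar>dpow H \<bar>t\<bar>\<bar> \<le> 1 / Hm + 128" "\<bar>dpow H \<bar>t - s\<bar>\<bar> \<le> 1 / Hm + 128"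
    using dpow_bound assms by auto
  then show ?thesis unfolding dcov_def by (rule abs3)
qed

lemma floor_approx: "(\<lambda>n. real_of_int \<lfloor>real (Suc n) * t\<rfloor> / real (Suc n)) \<longlonglongrightarrow> t"
proof (rule LIM_zero_cancel, rule Lim_null_comparison)
  show "\<forall>\<^sub>F n in sequentially. norm (real_of_int \<lfloor>real (Suc n) * t\<rfloor> / real (Suc n) - t) \<le> inverse (real (Suc n))"
  proof (rule always_eventually, rule allI)
    fix n
    have p: "real (Suc n) > 0" by simp
    have a: "real_of_int \<lfloor>real (Suc n) * t\<rfloor> \<le> real (Suc n) * t" by linarith
    have b: "real (Suc n) * t - 1 < real_of_int \<lfloor>real (Suc n) * t\<rfloor>" by linarith
    have "real_of_int \<lfloor>real (Suc n) * t\<rfloor> / real (Suc n) - t = (real_of_int \<lfloor>real (Suc n) * t\<rfloor> - real (Suc n) * t) / real (Suc n)"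
      using p by (simp add: field_simps)
    moreover have "\<bar>real_of_int \<lfloor>real (Suc n) * t\<rfloor> - real (Suc n) * t\<bar> \<le> 1" using a b by linarith
    ultimately show "norm (real_of_int \<lfloor>real (Suc n) * t\<rfloor> / real (Suc n) - t) \<le> inverse (real (Suc n))"
      using p by (simp add: abs_divide divide_le_eq inverse_eq_divide)
  qed
  show "(\<lambda>n. inverse (real (Suc n))) \<longlonglongrightarrow> 0" by (rule LIMSEQ_inverse_real_of_nat)
qed

lemma W_joint_meas:
  fixes W :: "real \<Rightarrow> 'a \<Rightarrow> real"
  assumes m: "\<And>t. W t \<in> borel_measurable M"
    and c: "\<And>\<omega>. \<omega> \<in> space M \<Longrightarrow> continuous_on UNIV (\<lambda>t. W t \<omega>)"
  shows "(\<lambda>x. W (fst x) (snd x)) \<in> borel_measurable (lborel \<Otimes>\<^sub>M M)"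
proof (rule borel_measurable_LIMSEQ_real)
  let ?u = "\<lambda>n x. W (real_of_int \<lfloor>real (Suc n) * fst x\<rfloor> / real (Suc n)) (snd x)"
  show "?u n \<in> borel_measurable (lborel \<Otimes>\<^sub>M M)" for n
  proof (rule measurable_compose_countable[where f="\<lambda>k x. W (real_of_int k / real (Suc n)) (snd x)"
        and g="\<lambda>x. \<lfloor>real (Suc n) * fst x\<rfloor>"])
    show "(\<lambda>x. W (real_of_int k / real (Suc n)) (snd x)) \<in> borel_measurable (lborel \<Otimes>\<^sub>M M)" for k :: int
      using m by measurable
    show "(\<lambda>x. \<lfloor>real (Suc n) * fst x\<rfloor>) \<in> measurable (lborel \<Otimes>\<^sub>M M) (count_space UNIV)"
      by measurable
  qed
  fix x :: "real \<times> 'a" assume x: "x \<in> space (lborel \<Otimes>\<^sub>M M)"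
  then have "snd x \<in> space M" by (simp add: space_pair_measure mem_Times_iff)
  then have "isCont (\<lambda>t. W t (snd x)) (fst x)" using c continuous_on_eq_continuous_at[of UNIV] by auto
  then show "(\<lambda>n. ?u n x) \<longlonglongrightarrow> W (fst x) (snd x)"
    using isCont_tendsto_compose[OF _ floor_approx] by blast
qed

definition mom :: "real \<Rightarrow> nat \<Rightarrow> (nat \<Rightarrow> 'b set) \<Rightarrow> (nat \<Rightarrow> 'b \<Rightarrow> real) \<Rightarrow> (nat \<Rightarrow> 'b \<Rightarrow> real) \<Rightarrow> real" where
  "mom H a J c \<tau> = (\<Sum>S\<in>Pow {..<2*a}. (-1)^(2*a - card S) *
       (qform H (Sigma S J) (\<lambda>(i,j). c i j) (\<lambda>(i,j). \<tau> i j) ^ a * (fact (2*a) / (2^a * fact a)))) / fact (2*a)"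

lemma sum_Sigma_lin:
  assumes "finite S" "\<And>i. finite (J i)"
  shows "(\<Sum>i\<in>S. \<Sum>j\<in>J i. c i j * W (\<tau> i j) \<omega>) = (\<Sum>k\<in>Sigma S J. (\<lambda>(i,j). c i j) k * W ((\<lambda>(i,j). \<tau> i j) k) \<omega>)"
  using assms by (simp add: sum.Sigma split_beta)

lemma prod_moment:
  fixes c \<tau> :: "nat \<Rightarrow> 'b \<Rightarrow> real"
  assumes fbm: "is_fBM M H W" and fin: "\<And>i. finite (J i)"
  shows "integrable M (\<lambda>\<omega>. \<Prod>i<2*a. \<Sum>j\<in>J i. c i j * W (\<tau> i j) \<omega>)"
    and "integral\<^sup>L M (\<lambda>\<omega>. \<Prod>i<2*a. \<Sum>j\<in>J i. c i j * W (\<tau> i j) \<omega>) = mom H a J c \<tau>"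
proof -
  let ?Y = "\<lambda>i \<omega>. \<Sum>j\<in>J i. c i j * W (\<tau> i j) \<omega>"
  let ?Z = "\<lambda>S \<omega>. \<Sum>k\<in>Sigma S J. (\<lambda>(i,j). c i j) k * W ((\<lambda>(i,j). \<tau> i j) k) \<omega>"
  have finS: "finite (Sigma S J)" if "S \<in> Pow {..<2*a}" for S
    using that fin finite_subset[of S "{..<2*a}"] by (intro finite_SigmaI) auto
  have eq: "(\<lambda>\<omega>. \<Prod>i<2*a. ?Y i \<omega>) = (\<lambda>\<omega>. (\<Sum>S\<in>Pow {..<2*a}. (-1)^(2*a - card S) * (?Z S \<omega>)^(2*a)) / fact (2*a))"
  proof
    fix \<omega>
    have "(\<Prod>i<2*a. ?Y i \<omega>) = (\<Sum>S\<in>Pow {..<2*a}. (-1)^(2*a - card S) * (\<Sum>i\<in>S. ?Y i \<omega>)^(2*a)) / fact (2*a)"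
      by (rule polarization)
    also have "\<dots> = (\<Sum>S\<in>Pow {..<2*a}. (-1)^(2*a - card S) * (?Z S \<omega>)^(2*a)) / fact (2*a)"
    proof (intro arg_cong[where f="\<lambda>x. x / _"] sum.cong refl)
      fix S assume "S \<in> Pow {..<2*a}"
      then have "finite S" using finite_subset by auto
      then show "(-1)^(2*a - card S) * (\<Sum>i\<in>S. ?Y i \<omega>)^(2*a) = (-1)^(2*a - card S) * (?Z S \<omega>)^(2*a)"
        using sum_Sigma_lin[OF _ fin, of S c W \<tau> \<omega>] by simp
    qed
    finally show "(\<Prod>i<2*a. ?Y i \<omega>) = (\<Sum>S\<in>Pow {..<2*a}. (-1)^(2*a - card S) * (?Z S \<omega>)^(2*a)) / fact (2*a)" .
  qed
  have iZ: "integrable M (\<lambda>\<omega>. (?Z S \<omega>)^(2*a))" if "S \<in> Pow {..<2*a}" for S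
    using fbm_gauss_moment(1)[OF fbm finS[OF that]] .
  have eZ: "integral\<^sup>L M (\<lambda>\<omega>. (?Z S \<omega>)^(2*a)) = qform H (Sigma S J) (\<lambda>(i,j). c i j) (\<lambda>(i,j). \<tau> i j) ^ a * (fact (2*a) / (2^a * fact a))"
    if "S \<in> Pow {..<2*a}" for S
    using fbm_gauss_moment(2)[OF fbm finS[OF that]] .
  show "integrable M (\<lambda>\<omega>. \<Prod>i<2*a. ?Y i \<omega>)"
    unfolding eq using iZ by (intro integrable_divide integrable_sum integrable_mult_right) auto
  have "integral\<^sup>L M (\<lambda>\<omega>. \<Prod>i<2*a. ?Y i \<omega>)
      = (\<Sum>S\<in>Pow {..<2*a}. (-1)^(2*a - card S) * integral\<^sup>L M (\<lambda>\<omega>. (?Z S \<omega>)^(2*a))) / fact (2*a)"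
  proof -
    have "integral\<^sup>L M (\<lambda>\<omega>. \<Sum>S\<in>Pow {..<2*a}. (-1)^(2*a - card S) * (?Z S \<omega>)^(2*a))
        = (\<Sum>S\<in>Pow {..<2*a}. integral\<^sup>L M (\<lambda>\<omega>. (-1)^(2*a - card S) * (?Z S \<omega>)^(2*a)))"
      by (rule Bochner_Integration.integral_sum[where f="\<lambda>S \<omega>. (-1)^(2*a - card S) * (?Z S \<omega>)^(2*a)"]) (use iZ in auto)
    then show ?thesis unfolding eq integral_divide_zero by simp
  qed
  also have "\<dots> = mom H a J c \<tau>"
    unfolding mom_def using eZ by (intro arg_cong[where f="\<lambda>x. x / _"] sum.cong refl) auto
  finally show "integral\<^sup>L M (\<lambda>\<omega>. \<Prod>i<2*a. ?Y i \<omega>) = mom H a J c \<tau>" .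
qed

definition dqform :: "real \<Rightarrow> 'b set \<Rightarrow> ('b \<Rightarrow> real) \<Rightarrow> ('b \<Rightarrow> real) \<Rightarrow> real" where
  "dqform H K d t = (\<Sum>j\<in>K. \<Sum>k\<in>K. d j * d k * dcov H (t j) (t k))"

lemma qform_deriv: "((\<lambda>H. qform H K d t) has_real_derivative dqform H K d t) (at H within S)"
  unfolding qform_def[abs_def] dqform_def
  by (intro DERIV_sum DERIV_cmult cov_deriv)

definition mfac :: "nat \<Rightarrow> real" where "mfac a = fact (2*a) / (2^a * fact a)"

definition dmom :: "real \<Rightarrow> nat \<Rightarrow> (nat \<Rightarrow> 'b set) \<Rightarrow> (nat \<Rightarrow> 'b \<Rightarrow> real) \<Rightarrow> (nat \<Rightarrow> 'b \<Rightarrow> real) \<Rightarrow> real" where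
  "dmom H a J c \<tau> = (\<Sum>S\<in>Pow {..<2*a}. (-1)^(2*a - card S) *
       (real a * (dqform H (Sigma S J) (\<lambda>(i,j). c i j) (\<lambda>(i,j). \<tau> i j) *
          qform H (Sigma S J) (\<lambda>(i,j). c i j) (\<lambda>(i,j). \<tau> i j) ^ (a - 1)) * mfac a)) / fact (2*a)"

lemma mom_deriv: "((\<lambda>H. mom H a J c \<tau>) has_real_derivative dmom H a J c \<tau>) (at H within S)"
proof -
  have "((\<lambda>H. qform H K d t ^ a * mfac a) has_real_derivative real a * (dqform H K d t * qform H K d t ^ (a - 1)) * mfac a) (at H within S)"
    for K :: "(nat \<times> 'b) set" and d t
    using DERIV_cmult_right[OF DERIV_power[OF qform_deriv[where K=K and d=d and t=t and H=H and S=S], where n=a], where c="mfac a"] by simp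
  then show ?thesis unfolding mom_def[abs_def] dmom_def mfac_def[symmetric]
    by (intro DERIV_cdivide DERIV_sum DERIV_cmult)
qed

lemma abs_sum_le_card:
  fixes f :: "'b \<Rightarrow> real"
  assumes "\<And>i. i \<in> A \<Longrightarrow> \<bar>f i\<bar> \<le> B"
  shows "\<bar>sum f A\<bar> \<le> real (card A) * B"
proof -
  have "\<bar>sum f A\<bar> \<le> sum (\<lambda>i. \<bar>f i\<bar>) A" by (rule sum_abs)
  also have "\<dots> \<le> real (card A) * B" using sum_bounded_above[of A "\<lambda>i. \<bar>f i\<bar>" B] assms by simp
  finally show ?thesis .
qed

lemma qform_bound:
  assumes "\<And>k. k \<in> K \<Longrightarrow> \<bar>d k\<bar> \<le> 1" "\<And>k. k \<in> K \<Longrightarrow> \<bar>t k\<bar> \<le> 2" "0 \<le> H" "H \<le> 1"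
  shows "\<bar>qform H K d t\<bar> \<le> real (card K) * (real (card K) * 32)"
  unfolding qform_def
proof (rule abs_sum_le_card)
  fix j assume j: "j \<in> K"
  show "\<bar>\<Sum>k\<in>K. d j * d k * fbm_cov H (t j) (t k)\<bar> \<le> real (card K) * 32"
  proof (rule abs_sum_le_card)
    fix k assume k: "k \<in> K"
    have "\<bar>d j * d k * fbm_cov H (t j) (t k)\<bar> = \<bar>d j\<bar> * \<bar>d k\<bar> * \<bar>fbm_cov H (t j) (t k)\<bar>" by (simp add: abs_mult)
    also have "\<dots> \<le> 1 * 1 * 32" using assms j k cov_bound[of "t j" "t k" H]
      by (intro mult_mono) auto
    finally show "\<bar>d j * d k * fbm_cov H (t j) (t k)\<bar> \<le> 32" by simp
  qed
qed

lemma dqform_bound: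
  assumes "\<And>k. k \<in> K \<Longrightarrow> \<bar>d k\<bar> \<le> 1" "\<And>k. k \<in> K \<Longrightarrow> \<bar>t k\<bar> \<le> 2" "0 < Hm" "Hm \<le> H" "H \<le> 1"
  shows "\<bar>dqform H K d t\<bar> \<le> real (card K) * (real (card K) * (2 * (1 / Hm + 128)))"
  unfolding dqform_def
proof (rule abs_sum_le_card)
  fix j assume j: "j \<in> K"
  show "\<bar>\<Sum>k\<in>K. d j * d k * dcov H (t j) (t k)\<bar> \<le> real (card K) * (2 * (1 / Hm + 128))"
  proof (rule abs_sum_le_card)
    fix k assume k: "k \<in> K"
    have "\<bar>d j * d k * dcov H (t j) (t k)\<bar> = \<bar>d j\<bar> * \<bar>d k\<bar> * \<bar>dcov H (t j) (t k)\<bar>" by (simp add: abs_mult)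
    also have "\<dots> \<le> 1 * 1 * (2 * (1 / Hm + 128))" using assms j k dcov_bound[of "t j" "t k" Hm H]
      by (intro mult_mono) auto
    finally show "\<bar>d j * d k * dcov H (t j) (t k)\<bar> \<le> 2 * (1 / Hm + 128)" by simp
  qed
qed

lemma card_Sig2: "S \<subseteq> {..<2*a} \<Longrightarrow> real (card (Sigma S (\<lambda>_. {..<2::nat}))) \<le> 4 * real a"
proof -
  assume S: "S \<subseteq> {..<2*a}"
  have "card S \<le> 2*a" using card_mono[OF _ S] by simp
  moreover have "card (Sigma S (\<lambda>_. {..<2::nat})) = card S * 2" by (simp add: card_cartesian_product)
  ultimately show ?thesis by simp
qed

definition Q0 :: "nat \<Rightarrow> real" where "Q0 a = (4 * real a) * ((4 * real a) * 32)"
definition Q1 :: "real \<Rightarrow> nat \<Rightarrow> real" where "Q1 Hm a = (4 * real a) * ((4 * real a) * (2 * (1 / Hm + 128)))"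
definition DB :: "real \<Rightarrow> nat \<Rightarrow> real" where
  "DB Hm a = 2^(2*a) * (real a * (Q1 Hm a * Q0 a ^ (a - 1)) * mfac a) / fact (2*a)"

lemma mfac_nonneg: "mfac a \<ge> 0" by (simp add: mfac_def)
lemma Q0_nonneg: "Q0 a \<ge> 0" by (simp add: Q0_def)
lemma Q1_nonneg: "Hm > 0 \<Longrightarrow> Q1 Hm a \<ge> 0" by (simp add: Q1_def add_pos_pos less_imp_le)

lemma qS_bound:
  assumes "S \<subseteq> {..<2*a}" "\<And>i j. \<bar>c i j\<bar> \<le> 1" "\<And>i j. \<bar>\<tau> i j\<bar> \<le> 2" "0 \<le> H" "H \<le> 1"
  shows "\<bar>qform H (Sigma S (\<lambda>_. {..<2::nat})) (\<lambda>(i,j). c i j) (\<lambda>(i,j). \<tau> i j)\<bar> \<le> Q0 a"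
proof -
  let ?K = "Sigma S (\<lambda>_. {..<2::nat})"
  have "\<bar>qform H ?K (\<lambda>(i,j). c i j) (\<lambda>(i,j). \<tau> i j)\<bar> \<le> real (card ?K) * (real (card ?K) * 32)"
    using assms by (intro qform_bound) auto
  also have "\<dots> \<le> Q0 a" unfolding Q0_def using card_Sig2[OF assms(1)]
    by (intro mult_mono) auto
  finally show ?thesis .
qed

lemma dqS_bound:
  assumes "S \<subseteq> {..<2*a}" "\<And>i j. \<bar>c i j\<bar> \<le> 1" "\<And>i j. \<bar>\<tau> i j\<bar> \<le> 2" "0 < Hm" "Hm \<le> H" "H \<le> 1"
  shows "\<bar>dqform H (Sigma S (\<lambda>_. {..<2::nat})) (\<lambda>(i,j). c i j) (\<lambda>(i,j). \<tau> i j)\<bar> \<le> Q1 Hm a"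
proof -
  let ?K = "Sigma S (\<lambda>_. {..<2::nat})"
  have "\<bar>dqform H ?K (\<lambda>(i,j). c i j) (\<lambda>(i,j). \<tau> i j)\<bar> \<le> real (card ?K) * (real (card ?K) * (2 * (1 / Hm + 128)))"
    using assms by (intro dqform_bound) auto
  also have "\<dots> \<le> Q1 Hm a" unfolding Q1_def using card_Sig2[OF assms(1)] assms(4)
    by (intro mult_mono) (auto simp: add_pos_pos less_imp_le)
  finally show ?thesis .
qed

lemma dmom_bound:
  assumes "\<And>i j. \<bar>c i j\<bar> \<le> 1" "\<And>i j. \<bar>\<tau> i j\<bar> \<le> 2" "0 < Hm" "Hm \<le> H" "H \<le> 1"
  shows "\<bar>dmom H a (\<lambda>_. {..<2::nat}) c \<tau>\<bar> \<le> DB Hm a"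
proof -
  have "\<bar>\<Sum>S\<in>Pow {..<2*a}. (-1)^(2*a - card S) *
       (real a * (dqform H (Sigma S (\<lambda>_. {..<2::nat})) (\<lambda>(i,j). c i j) (\<lambda>(i,j). \<tau> i j) *
          qform H (Sigma S (\<lambda>_. {..<2::nat})) (\<lambda>(i,j). c i j) (\<lambda>(i,j). \<tau> i j) ^ (a - 1)) * mfac a)\<bar>
      \<le> real (card (Pow {..<2*a})) * (real a * (Q1 Hm a * Q0 a ^ (a - 1)) * mfac a)"
  proof (rule abs_sum_le_card)
    fix S assume S: "S \<in> Pow {..<2*a}"
    let ?q = "qform H (Sigma S (\<lambda>_. {..<2::nat})) (\<lambda>(i,j). c i j) (\<lambda>(i,j). \<tau> i j)"
    let ?dq = "dqform H (Sigma S (\<lambda>_. {..<2::nat})) (\<lambda>(i,j). c i j) (\<lambda>(i,j). \<tau> i j)"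
    have q: "\<bar>?q\<bar> \<le> Q0 a" using S assms by (intro qS_bound) auto
    have dq: "\<bar>?dq\<bar> \<le> Q1 Hm a" using S assms by (intro dqS_bound) auto
    have qa: "\<bar>?q\<bar> ^ (a - 1) \<le> Q0 a ^ (a - 1)" using q by (intro power_mono) auto
    have "\<bar>(-1)^(2*a - card S) * (real a * (?dq * ?q ^ (a - 1)) * mfac a)\<bar>
        = real a * (\<bar>?dq\<bar> * \<bar>?q\<bar> ^ (a - 1)) * mfac a"
      using mfac_nonneg[of a] by (simp add: abs_mult power_abs)
    also have "\<dots> \<le> real a * (Q1 Hm a * Q0 a ^ (a - 1)) * mfac a"
      using dq qa mfac_nonneg[of a] Q0_nonneg[of a] Q1_nonneg[of Hm a] assms(3)
      by (intro mult_mono mult_left_mono) auto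
    finally show "\<bar>(-1)^(2*a - card S) * (real a * (?dq * ?q ^ (a - 1)) * mfac a)\<bar>
        \<le> real a * (Q1 Hm a * Q0 a ^ (a - 1)) * mfac a" .
  qed
  moreover have "card (Pow {..<2*a}) = 2^(2*a)" by (simp add: card_Pow)
  ultimately show ?thesis unfolding dmom_def DB_def by (simp add: abs_divide divide_right_mono)
qed

lemma even_pow_nonneg: "(x::real) ^ (2*a) \<ge> 0"
  by (simp add: power_mult)

lemma qform_nonneg_fbm:
  assumes fbm: "is_fBM M H W" and fin: "finite K"
  shows "qform H K d t \<ge> 0"
  using fbm_gauss_moment(3)[OF fbm fin] .

lemma int_mom:
  fixes c :: "nat \<Rightarrow> nat \<Rightarrow> real" and \<tau> :: "'w \<Rightarrow> nat \<Rightarrow> nat \<Rightarrow> real" and W :: "real \<Rightarrow> 'a \<Rightarrow> real"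
  assumes fbm: "is_fBM M H W" and H: "0 \<le> H" "H \<le> 1"
    and fN: "finite_measure N"
    and \<tau>m: "\<And>k j. (\<lambda>w. \<tau> w k j) \<in> borel_measurable N"
    and cb: "\<And>k j. \<bar>c k j\<bar> \<le> 1" and \<tau>b: "\<And>w k j. \<bar>\<tau> w k j\<bar> \<le> 2"
  shows "integrable (N \<Otimes>\<^sub>M M) (\<lambda>x. \<Prod>k<2*a. \<Sum>j<2. c k j * W (\<tau> (fst x) k j) (snd x))"
    and "integrable M (\<lambda>\<omega>. \<integral>w. (\<Prod>k<2*a. \<Sum>j<2. c k j * W (\<tau> w k j) \<omega>) \<partial>N)"
    and "(\<integral>\<omega>. (\<integral>w. (\<Prod>k<2*a. \<Sum>j<2. c k j * W (\<tau> w k j) \<omega>) \<partial>N) \<partial>M)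
         = (\<integral>w. mom H a (\<lambda>_. {..<2}) c (\<tau> w) \<partial>N)"
proof -
  let ?h = "\<lambda>w \<omega>. \<Prod>k<2*a. \<Sum>j<2. c k j * W (\<tau> w k j) \<omega>"
  let ?J = "\<lambda>_::nat. {..<2::nat}"
  interpret M: prob_space M using fbm unfolding is_fBM_def by blast
  interpret N: finite_measure N by (rule fN)
  interpret P: pair_sigma_finite N M
    unfolding pair_sigma_finite_def using N.sigma_finite_measure_axioms M.sigma_finite_measure_axioms by blast
  have Wm: "\<And>t. W t \<in> borel_measurable M" and Wc: "\<And>\<omega>. \<omega> \<in> space M \<Longrightarrow> continuous_on UNIV (\<lambda>t. W t \<omega>)"
    using fbm unfolding is_fBM_def by auto
  have WJ: "(\<lambda>x. W (fst x) (snd x)) \<in> borel_measurable (lborel \<Otimes>\<^sub>M M)"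
    by (rule W_joint_meas[OF Wm Wc])
  have mT: "(\<lambda>x. W (\<tau> (fst x) k j) (snd x)) \<in> borel_measurable (N \<Otimes>\<^sub>M M)" for k j
  proof -
    have "(\<lambda>x. (\<tau> (fst x) k j, snd x)) \<in> measurable (N \<Otimes>\<^sub>M M) (lborel \<Otimes>\<^sub>M M)"
      using \<tau>m[of k j] by (intro measurable_Pair) (auto simp: measurable_lborel2)
    from measurable_compose[OF this WJ] show ?thesis by simp
  qed
  let ?Z = "\<lambda>S w \<omega>. \<Sum>x\<in>Sigma S ?J. (\<lambda>(i,j). c i j) x * W ((\<lambda>(i,j). \<tau> w i j) x) \<omega>"
  have finS: "finite (Sigma S ?J)" if "S \<in> Pow {..<2*a}" for S
    using that finite_subset[of S "{..<2*a}"] by (intro finite_SigmaI) auto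
  have eq: "?h w \<omega> = (\<Sum>S\<in>Pow {..<2*a}. (-1)^(2*a - card S) * (?Z S w \<omega>)^(2*a)) / fact (2*a)" for w \<omega>
  proof -
    have "?h w \<omega> = (\<Sum>S\<in>Pow {..<2*a}. (-1)^(2*a - card S) * (\<Sum>i\<in>S. \<Sum>j<2. c i j * W (\<tau> w i j) \<omega>)^(2*a)) / fact (2*a)"
      by (rule polarization)
    also have "\<dots> = (\<Sum>S\<in>Pow {..<2*a}. (-1)^(2*a - card S) * (?Z S w \<omega>)^(2*a)) / fact (2*a)"
    proof (intro arg_cong[where f="\<lambda>x. x / _"] sum.cong refl)
      fix S assume "S \<in> Pow {..<2*a}"
      then have "finite S" using finite_subset by auto
      then show "(-1)^(2*a - card S) * (\<Sum>i\<in>S. \<Sum>j<2. c i j * W (\<tau> w i j) \<omega>)^(2*a) = (-1)^(2*a - card S) * (?Z S w \<omega>)^(2*a)"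
        using sum_Sigma_lin[of S ?J c W "\<tau> w" \<omega>] by simp
    qed
    finally show ?thesis .
  qed
  have mZ: "(\<lambda>x. ?Z S (fst x) (snd x)) \<in> borel_measurable (N \<Otimes>\<^sub>M M)" for S
    using mT by (auto simp: split_beta intro!: borel_measurable_sum borel_measurable_times)
  have iZ: "integrable (N \<Otimes>\<^sub>M M) (\<lambda>x. (?Z S (fst x) (snd x))^(2*a))" if S: "S \<in> Pow {..<2*a}" for S
  proof (subst integrable_iff_bounded, intro conjI)
    show m2: "(\<lambda>x. (?Z S (fst x) (snd x))^(2*a)) \<in> borel_measurable (N \<Otimes>\<^sub>M M)"
      using mZ[of S] by measurable
    have inner: "(\<integral>\<^sup>+\<omega>. ennreal ((?Z S w \<omega>)^(2*a)) \<partial>M) \<le> ennreal (Q0 a ^ a * mfac a)" for w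
    proof -
      have i1: "integrable M (\<lambda>\<omega>. (?Z S w \<omega>)^(2*a))"
        by (rule fbm_gauss_moment(1)[OF fbm finS[OF S]])
      have "(\<integral>\<^sup>+\<omega>. ennreal ((?Z S w \<omega>)^(2*a)) \<partial>M) = ennreal (\<integral>\<omega>. (?Z S w \<omega>)^(2*a) \<partial>M)"
        by (rule nn_integral_eq_integral[OF i1]) (simp add: even_pow_nonneg)
      also have "(\<integral>\<omega>. (?Z S w \<omega>)^(2*a) \<partial>M) = qform H (Sigma S ?J) (\<lambda>(i,j). c i j) (\<lambda>(i,j). \<tau> w i j) ^ a * mfac a"
        unfolding mfac_def by (rule fbm_gauss_moment(2)[OF fbm finS[OF S]])
      also have "\<dots> \<le> Q0 a ^ a * mfac a"
      proof (intro mult_right_mono power_mono mfac_nonneg)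
        show "0 \<le> qform H (Sigma S ?J) (\<lambda>(i,j). c i j) (\<lambda>(i,j). \<tau> w i j)"
          by (rule qform_nonneg_fbm[OF fbm finS[OF S]])
        show "qform H (Sigma S ?J) (\<lambda>(i,j). c i j) (\<lambda>(i,j). \<tau> w i j) \<le> Q0 a"
          using qS_bound[of S a c "\<tau> w" H] S cb \<tau>b H by auto
      qed
      finally show ?thesis using ennreal_leI by blast
    qed
    have "(\<integral>\<^sup>+x. ennreal (norm ((?Z S (fst x) (snd x))^(2*a))) \<partial>(N \<Otimes>\<^sub>M M))
        = (\<integral>\<^sup>+x. ennreal ((?Z S (fst x) (snd x))^(2*a)) \<partial>(N \<Otimes>\<^sub>M M))"
      by (intro nn_integral_cong) (simp add: even_pow_nonneg)
    also have "\<dots> = (\<integral>\<^sup>+w. (\<integral>\<^sup>+\<omega>. ennreal ((?Z S w \<omega>)^(2*a)) \<partial>M) \<partial>N)"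
      using M.nn_integral_fst[symmetric, of "\<lambda>x. ennreal ((?Z S (fst x) (snd x))^(2*a))" N] m2 by simp
    also have "\<dots> \<le> (\<integral>\<^sup>+w. ennreal (Q0 a ^ a * mfac a) \<partial>N)"
      by (intro nn_integral_mono inner)
    also have "\<dots> = ennreal (Q0 a ^ a * mfac a) * emeasure N (space N)" by simp
    also have "\<dots> < \<infinity>" using N.emeasure_finite[of "space N"] by (simp add: ennreal_mult_eq_top_iff less_top[symmetric])
    finally show "(\<integral>\<^sup>+x. ennreal (norm ((?Z S (fst x) (snd x))^(2*a))) \<partial>(N \<Otimes>\<^sub>M M)) < \<infinity>" .
  qed
  have ih: "integrable (N \<Otimes>\<^sub>M M) (\<lambda>x. ?h (fst x) (snd x))"
    unfolding eq using iZ by (intro integrable_divide Bochner_Integration.integrable_sum integrable_mult_right) auto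
  then show "integrable (N \<Otimes>\<^sub>M M) (\<lambda>x. \<Prod>k<2*a. \<Sum>j<2. c k j * W (\<tau> (fst x) k j) (snd x))" .
  have ih': "integrable (N \<Otimes>\<^sub>M M) (case_prod ?h)" using ih unfolding case_prod_unfold .
  show "integrable M (\<lambda>\<omega>. \<integral>w. ?h w \<omega> \<partial>N)" by (rule P.integrable_snd[OF ih'])
  have "(\<integral>\<omega>. (\<integral>w. ?h w \<omega> \<partial>N) \<partial>M) = (\<integral>w. (\<integral>\<omega>. ?h w \<omega> \<partial>M) \<partial>N)"
    by (rule P.Fubini_integral[OF ih'])
  also have "\<dots> = (\<integral>w. mom H a ?J c (\<tau> w) \<partial>N)"
  proof (rule Bochner_Integration.integral_cong[OF refl])
    fix w
    show "(\<integral>\<omega>. ?h w \<omega> \<partial>M) = mom H a ?J c (\<tau> w)"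
      using prod_moment(2)[OF fbm, of ?J c "\<tau> w" a] by simp
  qed
  finally show "(\<integral>\<omega>. (\<integral>w. ?h w \<omega> \<partial>N) \<partial>M) = (\<integral>w. mom H a ?J c (\<tau> w) \<partial>N)" .
qed

definition Cube :: "nat \<Rightarrow> (nat \<Rightarrow> real) set" where
  "Cube s = PiE {..<s} (\<lambda>_. {0..1})"

definition Nc :: "nat \<Rightarrow> (nat \<Rightarrow> real) measure" where
  "Nc s = density (PiM {..<s} (\<lambda>_. lborel)) (\<lambda>u. ennreal (indicator (Cube s) u))"

definition cl :: "real \<Rightarrow> real" where "cl x = min 1 (max 0 x)"

definition tt :: "nat \<Rightarrow> int \<Rightarrow> (nat \<Rightarrow> real) \<Rightarrow> nat \<Rightarrow> nat \<Rightarrow> real" where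
  "tt p l u i j = (if j = 0 then (real_of_int l + cl (u i)) * 2 powr (- real p) else real_of_int l * 2 powr (- real p))"

definition cc :: "nat list \<Rightarrow> nat \<Rightarrow> real" where
  "cc r j = (if j = 0 then 1 else if sum_list r = 1 then 0 else -1)"

definition ix :: "nat list \<Rightarrow> nat list" where
  "ix r = concat (map (\<lambda>i. replicate (r!i) i) [0..<length r])"

definition GG :: "(real \<Rightarrow> 'a \<Rightarrow> real) \<Rightarrow> nat list \<Rightarrow> nat \<Rightarrow> int \<Rightarrow> (nat \<Rightarrow> real) \<Rightarrow> 'a \<Rightarrow> real" where
  "GG W r p l u \<omega> = (\<Prod>k<sum_list r. \<Sum>j<2. cc r j * W (tt p l u (ix r ! k) j) \<omega>)"

definition valid :: "nat list \<Rightarrow> bool" where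
  "valid r \<longleftrightarrow> r \<noteq> [] \<and> (\<forall>x\<in>set r. x \<ge> 1)"

lemma prod_list_nth: "prod_list (map f xs) = (\<Prod>k<length xs. f (xs ! k))"
proof (induction xs)
  case Nil then show ?case by simp
next
  case (Cons x xs)
  then show ?case by (simp del: prod.lessThan_Suc add: prod.lessThan_Suc_shift)
qed

lemma prod_list_concat_map: "prod_list (map f (concat (map g xs))) = prod_list (map (\<lambda>x. prod_list (map f (g x))) xs)"
  by (induction xs) auto

lemma length_ix: "length (ix r) = sum_list r"
proof -
  have "length (ix r) = sum_list (map (\<lambda>i. r ! i) [0..<length r])"
    unfolding ix_def by (simp add: length_concat comp_def)
  also have "\<dots> = sum_list r" by (simp add: map_nth)
  finally show ?thesis .
qed

lemma ix_lt: "k < sum_list r \<Longrightarrow> ix r ! k < length r"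
proof -
  assume "k < sum_list r"
  then have "ix r ! k \<in> set (ix r)" using length_ix[of r] by simp
  then show ?thesis unfolding ix_def by auto
qed

lemma prod_ix: "(\<Prod>k<sum_list r. f (ix r ! k)) = (\<Prod>i<length r. f i ^ (r ! i))"
proof -
  have "(\<Prod>k<sum_list r. f (ix r ! k)) = prod_list (map f (ix r))"
    by (simp add: prod_list_nth length_ix)
  also have "\<dots> = prod_list (map (\<lambda>i. f i ^ (r ! i)) [0..<length r])"
    unfolding ix_def prod_list_concat_map by simp
  also have "\<dots> = (\<Prod>i<length r. f i ^ (r ! i))"
    by (simp add: prod_list_nth)
  finally show ?thesis .
qed

lemma valid_sum1: "valid r \<Longrightarrow> sum_list r = 1 \<Longrightarrow> r = [1]"
proof -
  assume v: "valid r" and s: "sum_list r = 1"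
  then obtain x xs where r: "r = x # xs" unfolding valid_def by (cases r) auto
  have x: "x \<ge> 1" "\<forall>y\<in>set xs. y \<ge> 1" using v r unfolding valid_def by auto
  have e: "x + sum_list xs = 1" using s r by simp
  then have "sum_list xs = 0" using x(1) by linarith
  moreover have "x = 1" using e x(1) by linarith
  ultimately have "xs = []" using x(2) by (cases xs) auto
  then show ?thesis using r \<open>x = 1\<close> by simp
qed

lemma psf_lborel: "product_sigma_finite (\<lambda>_::nat. lborel)"
  by standard

lemma prob_Nc: "prob_space (Nc s)"
proof
  interpret product_sigma_finite "\<lambda>_::nat. lborel" by (rule psf_lborel)
  have "emeasure (Nc s) (space (Nc s)) = (\<integral>\<^sup>+u. ennreal (indicator (Cube s) u) \<partial>PiM {..<s} (\<lambda>_. lborel))"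
    unfolding Nc_def by (subst emeasure_density) (auto simp: Cube_def)
  also have "\<dots> = emeasure (PiM {..<s} (\<lambda>_. lborel)) (Cube s)"
  proof -
    have "Cube s \<in> sets (PiM {..<s} (\<lambda>_. lborel))" unfolding Cube_def by (rule sets_PiM_I_finite) auto
    then show ?thesis by (simp add: ennreal_indicator nn_integral_indicator)
  qed
  also have "\<dots> = (\<Prod>i<s. emeasure lborel {0..1::real})"
    unfolding Cube_def by (subst emeasure_PiM) auto
  also have "\<dots> = 1" by simp
  finally show "emeasure (Nc s) (space (Nc s)) = 1" .
qed


lemma tt_meas: "i < s \<Longrightarrow> (\<lambda>u. tt p l u i j) \<in> borel_measurable (PiM {..<s} (\<lambda>_. lborel))"
  unfolding tt_def cl_def by measurable

lemma GG_meas: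
  assumes c: "continuous_on UNIV (\<lambda>t. W t \<omega>)"
  shows "(\<lambda>u. GG W r p l u \<omega>) \<in> borel_measurable (PiM {..<length r} (\<lambda>_. lborel))"
proof -
  have Wm: "(\<lambda>t. W t \<omega>) \<in> borel_measurable borel"
    using c by (intro borel_measurable_continuous_onI)
  have "(\<lambda>u. W (tt p l u (ix r ! k) j) \<omega>) \<in> borel_measurable (PiM {..<length r} (\<lambda>_. lborel))"
    if "k < sum_list r" for k j
    using measurable_compose[OF tt_meas[OF ix_lt[OF that], of p l j] Wm] by simp
  then show ?thesis unfolding GG_def
    by (intro borel_measurable_prod borel_measurable_sum borel_measurable_times borel_measurable_const) auto
qed

lemma cl_id: "0 \<le> x \<Longrightarrow> x \<le> 1 \<Longrightarrow> cl x = x" by (simp add: cl_def)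

lemma Y_eq: "sum_list r \<noteq> 1 \<Longrightarrow> 0 \<le> u i \<Longrightarrow> u i \<le> 1 \<Longrightarrow>
  (\<Sum>j<2. cc r j * W (tt p l u i j) \<omega>) = W ((of_int l + u i) * 2 powr (- real p)) \<omega> - W (of_int l * 2 powr (- real p)) \<omega>"
  by (simp add: numeral_2_eq_2 cc_def tt_def cl_id)

lemma frakW_eq:
  assumes c: "continuous_on UNIV (\<lambda>t. W t \<omega>)" and v: "valid r"
  shows "frakW W p l r \<omega> = (1 / real (prod_list (map fact r))) * integral\<^sup>L (Nc (length r)) (\<lambda>u. GG W r p l u \<omega>)"
proof -
  let ?s = "length r"
  have Wm: "(\<lambda>t. W t \<omega>) \<in> borel_measurable borel"
    using c by (intro borel_measurable_continuous_onI)
  have Csets: "Cube s \<in> sets (PiM {..<s} (\<lambda>_. lborel))" for s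
    unfolding Cube_def by (rule sets_PiM_I_finite) auto
  have dens: "integral\<^sup>L (Nc ?s) (\<lambda>u. GG W r p l u \<omega>)
      = (LINT u|PiM {..<?s} (\<lambda>_. lborel). indicator (Cube ?s) u * GG W r p l u \<omega>)"
    unfolding Nc_def using Csets[of ?s]
    by (subst integral_density) (auto intro: GG_meas[where W=W and \<omega>=\<omega>, OF c])
  show ?thesis
  proof (cases "sum_list r = 1")
    case False
    have "frakW W p l r \<omega> = (1 / real (prod_list (map fact r))) *
       (LINT u|PiM {..<?s} (\<lambda>_. lborel). indicator (Cube ?s) u *
           (\<Prod>i<?s. (W ((of_int l + u i) * 2 powr (- real p)) \<omega> - W (of_int l * 2 powr (- real p)) \<omega>) ^ (r ! i)))"
      unfolding frakW_def using False by (simp add: set_lebesgue_integral_def Cube_def)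
    also have "(LINT u|PiM {..<?s} (\<lambda>_. lborel). indicator (Cube ?s) u *
           (\<Prod>i<?s. (W ((of_int l + u i) * 2 powr (- real p)) \<omega> - W (of_int l * 2 powr (- real p)) \<omega>) ^ (r ! i)))
        = (LINT u|PiM {..<?s} (\<lambda>_. lborel). indicator (Cube ?s) u * GG W r p l u \<omega>)"
    proof (rule Bochner_Integration.integral_cong[OF refl])
      fix u
      show "indicator (Cube ?s) u *
           (\<Prod>i<?s. (W ((of_int l + u i) * 2 powr (- real p)) \<omega> - W (of_int l * 2 powr (- real p)) \<omega>) ^ (r ! i))
          = indicator (Cube ?s) u * GG W r p l u \<omega>"
      proof (cases "u \<in> Cube ?s")
        case True
        have "GG W r p l u \<omega> = (\<Prod>i<?s. (\<Sum>j<2. cc r j * W (tt p l u i j) \<omega>) ^ (r ! i))"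
          unfolding GG_def by (rule prod_ix[where f="\<lambda>i. \<Sum>j<2. cc r j * W (tt p l u i j) \<omega>"])
        also have "\<dots> = (\<Prod>i<?s. (W ((of_int l + u i) * 2 powr (- real p)) \<omega> - W (of_int l * 2 powr (- real p)) \<omega>) ^ (r ! i))"
        proof (rule prod.cong[OF refl])
          fix i assume "i \<in> {..<?s}"
          then have "0 \<le> u i" "u i \<le> 1" using PiE_mem[OF True[unfolded Cube_def]] by auto
          then show "(\<Sum>j<2. cc r j * W (tt p l u i j) \<omega>) ^ (r ! i) =
              (W ((of_int l + u i) * 2 powr (- real p)) \<omega> - W (of_int l * 2 powr (- real p)) \<omega>) ^ (r ! i)"
            using Y_eq[where r=r and u=u and i=i and W=W and p=p and l=l and \<omega>=\<omega>] False by simp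
        qed
        finally have "GG W r p l u \<omega> = (\<Prod>i<?s. (W ((of_int l + u i) * 2 powr (- real p)) \<omega> - W (of_int l * 2 powr (- real p)) \<omega>) ^ (r ! i))" .
        then show ?thesis by (simp only:)
      qed (simp add: indicator_def)
    qed
    finally show ?thesis unfolding dens .
  next
    case True
    then have r1: "r = [1]" using valid_sum1[OF v] by simp
    interpret product_sigma_finite "\<lambda>_::nat. lborel" by (rule psf_lborel)
    let ?F = "\<lambda>x. indicator {0..1} x * W ((real_of_int l + cl x) * 2 powr (- real p)) \<omega>"
    have Fm: "?F \<in> borel_measurable lborel"
      using measurable_compose[of "\<lambda>x. (real_of_int l + cl x) * 2 powr (- real p)" lborel borel, OF _ Wm]
      unfolding cl_def by measurable
    have "integral\<^sup>L (Nc 1) (\<lambda>u. GG W r p l u \<omega>)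
      = (LINT u|PiM {..<1} (\<lambda>_. lborel). indicator (Cube 1) u * GG W r p l u \<omega>)"
      using dens r1 by simp
    also have "\<dots> = (LINT u|PiM {0::nat} (\<lambda>_. lborel). ?F (u 0))"
    proof (rule Bochner_Integration.integral_cong)
      show "PiM {..<1} (\<lambda>_. lborel) = PiM {0} (\<lambda>_::nat. lborel :: real measure)" by (simp add: lessThan_Suc)
      fix u assume u: "u \<in> space (PiM {0} (\<lambda>_::nat. lborel :: real measure))"
      have "indicator (Cube 1) u = (indicator {0..1} (u 0) :: real)"
        using u by (auto simp: Cube_def space_PiM indicator_def PiE_def extensional_def lessThan_Suc)
      moreover have "GG W r p l u \<omega> = W ((real_of_int l + cl (u 0)) * 2 powr (- real p)) \<omega>"
        unfolding GG_def r1 by (simp add: numeral_2_eq_2 cc_def tt_def ix_def)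
      ultimately show "indicator (Cube 1) u * GG W r p l u \<omega> = ?F (u 0)" by simp
    qed
    also have "\<dots> = (LINT x|lborel. ?F x)"
      by (rule product_integral_singleton[OF Fm])
    also have "\<dots> = set_lebesgue_integral lborel {0..1} (\<lambda>x. W ((of_int l + x) * 2 powr (- real p)) \<omega>)"
      unfolding set_lebesgue_integral_def
      by (intro Bochner_Integration.integral_cong refl) (auto simp: indicator_def cl_id)
    finally show ?thesis unfolding frakW_def using True r1 by simp
  qed
qed

definition inrange :: "nat \<Rightarrow> int \<Rightarrow> bool" where
  "inrange p l \<longleftrightarrow> - (2^p - 1) \<le> l \<and> l \<le> 2^(p+1) - 1"

lemma tt_bound:
  assumes "inrange p l"
  shows "\<bar>tt p l u i j\<bar> \<le> 2"
proof -
  define c where "c = (2::real) powr (- real p)"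
  have cp: "c > 0" unfolding c_def by simp
  have c2: "c * 2^p = 1" unfolding c_def by (simp add: powr_minus powr_realpow field_simps)
  have i1: "- (2^p - 1) \<le> l" and i2: "l \<le> 2 * 2^p - 1" using assms unfolding inrange_def by auto
  have l1: "real_of_int l \<ge> - (2^p - 1)" using of_int_le_iff[where 'a=real, THEN iffD2, OF i1] by simp
  have l2: "real_of_int l \<le> 2 * 2^p - 1" using of_int_le_iff[where 'a=real, THEN iffD2, OF i2] by simp
  have cl: "0 \<le> cl x" "cl x \<le> 1" for x unfolding cl_def by auto
  have b: "\<bar>y * c\<bar> \<le> 2" if "- (2 * 2^p) \<le> y" "y \<le> 2 * 2^p" for y
  proof -
    have "\<bar>y\<bar> * c \<le> (2 * 2^p) * c" using that cp by (intro mult_right_mono) auto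
    moreover have "(2 * 2^p) * c = 2 * (c * 2^p)" by (simp only: ac_simps)
    ultimately show ?thesis using cp c2 by (simp add: abs_mult)
  qed
  show ?thesis unfolding tt_def c_def[symmetric]
    using b[of "real_of_int l + cl (u i)"] b[of "real_of_int l"] l1 l2 cl[of "u i"] by auto
qed

lemma prod_split: "(\<Prod>k<m+n. f k) = (\<Prod>k<m. f k) * (\<Prod>k<n. f (m + k))" for m n :: nat
  by (induction n) (auto simp: algebra_simps)

lemma prod_int:
  fixes f :: "'u \<Rightarrow> real" and g :: "'v \<Rightarrow> real"
  assumes N1: "prob_space N1" and N2: "prob_space N2"
    and fm: "f \<in> borel_measurable N1" and gm: "g \<in> borel_measurable N2"
    and fb: "\<And>x. x \<in> space N1 \<Longrightarrow> \<bar>f x\<bar> \<le> B1" and gb: "\<And>y. y \<in> space N2 \<Longrightarrow> \<bar>g y\<bar> \<le> B2"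
  shows "integral\<^sup>L N1 f * integral\<^sup>L N2 g = (\<integral>w. f (fst w) * g (snd w) \<partial>(N1 \<Otimes>\<^sub>M N2))"
proof -
  interpret N1: prob_space N1 by (rule N1)
  interpret N2: prob_space N2 by (rule N2)
  interpret P: pair_prob_space N1 N2 by standard
  have int: "integrable (N1 \<Otimes>\<^sub>M N2) (\<lambda>w. f (fst w) * g (snd w))"
  proof (rule P.integrable_const_bound[where B="B1 * B2"])
    show "AE x in N1 \<Otimes>\<^sub>M N2. norm (f (fst x) * g (snd x)) \<le> B1 * B2"
    proof (rule AE_I2)
      fix x assume "x \<in> space (N1 \<Otimes>\<^sub>M N2)"
      then have "fst x \<in> space N1" "snd x \<in> space N2" by (auto simp: space_pair_measure)
      then show "norm (f (fst x) * g (snd x)) \<le> B1 * B2"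
        using fb gb by (auto simp: abs_mult intro!: mult_mono order_trans[OF abs_ge_zero])
    qed
    show "(\<lambda>w. f (fst w) * g (snd w)) \<in> borel_measurable (N1 \<Otimes>\<^sub>M N2)" using fm gm by measurable
  qed
  have "(\<integral>w. f (fst w) * g (snd w) \<partial>(N1 \<Otimes>\<^sub>M N2)) = (\<integral>x. (\<integral>y. f x * g y \<partial>N2) \<partial>N1)"
    using P.integral_fst'[OF int] by simp
  also have "\<dots> = (\<integral>x. f x * integral\<^sup>L N2 g \<partial>N1)" by simp
  also have "\<dots> = integral\<^sup>L N1 f * integral\<^sup>L N2 g" by simp
  finally show ?thesis by simp
qed


definition CC :: "nat list \<Rightarrow> nat list \<Rightarrow> nat \<Rightarrow> nat \<Rightarrow> real" where
  "CC rA rB k j = (if k < sum_list rA then cc rA j else cc rB j)"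

definition TT :: "nat \<Rightarrow> int \<Rightarrow> nat list \<Rightarrow> int \<Rightarrow> nat list \<Rightarrow> (nat \<Rightarrow> real) \<times> (nat \<Rightarrow> real) \<Rightarrow> nat \<Rightarrow> nat \<Rightarrow> real" where
  "TT p lA rA lB rB w k j = (if k < sum_list rA then tt p lA (fst w) (ix rA ! k) j
     else if k < sum_list rA + sum_list rB then tt p lB (snd w) (ix rB ! (k - sum_list rA)) j else 0)"

definition NN :: "nat list \<Rightarrow> nat list \<Rightarrow> ((nat \<Rightarrow> real) \<times> (nat \<Rightarrow> real)) measure" where
  "NN rA rB = Nc (length rA) \<Otimes>\<^sub>M Nc (length rB)"

definition fc :: "nat list \<Rightarrow> real" where "fc r = 1 / real (prod_list (map fact r))"

definition EF :: "nat \<Rightarrow> nat \<Rightarrow> real \<Rightarrow> int \<Rightarrow> nat list \<Rightarrow> int \<Rightarrow> nat list \<Rightarrow> real" where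
  "EF p a H lA rA lB rB = fc rA * fc rB * (\<integral>w. mom H a (\<lambda>_. {..<2}) (CC rA rB) (TT p lA rA lB rB w) \<partial>NN rA rB)"

lemma cc_bound: "\<bar>cc r j\<bar> \<le> 1" by (simp add: cc_def)
lemma CC_bound: "\<bar>CC rA rB k j\<bar> \<le> 1" by (simp add: CC_def cc_bound)

lemma TT_bound: "inrange p lA \<Longrightarrow> inrange p lB \<Longrightarrow> \<bar>TT p lA rA lB rB w k j\<bar> \<le> 2"
  unfolding TT_def using tt_bound by auto

lemma prob_NN: "prob_space (NN rA rB)"
  unfolding NN_def by (intro prob_space_pair prob_Nc)

lemma TT_meas: "(\<lambda>w. TT p lA rA lB rB w k j) \<in> borel_measurable (NN rA rB)"
proof -
  consider "k < sum_list rA" | "\<not> k < sum_list rA" "k < sum_list rA + sum_list rB" | "\<not> k < sum_list rA + sum_list rB" by linarith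
  then show ?thesis
  proof cases
    case 1
    have "(\<lambda>u. tt p lA u (ix rA ! k) j) \<in> borel_measurable (Nc (length rA))"
      unfolding Nc_def using tt_meas[OF ix_lt[OF 1]] by simp
    then have "(\<lambda>w. tt p lA (fst w) (ix rA ! k) j) \<in> borel_measurable (NN rA rB)"
      unfolding NN_def by measurable
    then show ?thesis using 1 unfolding TT_def by simp
  next
    case 2
    then have k: "k - sum_list rA < sum_list rB" by linarith
    have "(\<lambda>u. tt p lB u (ix rB ! (k - sum_list rA)) j) \<in> borel_measurable (Nc (length rB))"
      unfolding Nc_def using tt_meas[OF ix_lt[OF k]] by simp
    then have "(\<lambda>w. tt p lB (snd w) (ix rB ! (k - sum_list rA)) j) \<in> borel_measurable (NN rA rB)"
      unfolding NN_def by measurable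
    then show ?thesis using 2 unfolding TT_def by simp
  next
    case 3
    then show ?thesis unfolding TT_def by simp
  qed
qed

lemma W_bound:
  fixes W :: "real \<Rightarrow> 'a \<Rightarrow> real"
  assumes "continuous_on UNIV (\<lambda>t. W t \<omega>)"
  obtains B where "B \<ge> 0" "\<And>t. \<bar>t\<bar> \<le> 2 \<Longrightarrow> \<bar>W t \<omega>\<bar> \<le> B"
proof -
  have "compact ((\<lambda>t. W t \<omega>) ` {-2..2})"
    by (rule compact_continuous_image[OF continuous_on_subset[OF assms] compact_Icc]) simp
  then obtain B where B: "\<forall>x\<in>(\<lambda>t. W t \<omega>) ` {-2..2}. norm x \<le> B"
    using compact_imp_bounded bounded_iff by metis
  show ?thesis
  proof (rule that[of "max B 0"])
    fix t :: real assume "\<bar>t\<bar> \<le> 2"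
    then have "t \<in> {-2..2}" by auto
    then have "norm (W t \<omega>) \<le> B" using B by blast
    then show "\<bar>W t \<omega>\<bar> \<le> max B 0" by simp
  qed simp
qed

lemma GG_bound:
  fixes W :: "real \<Rightarrow> 'a \<Rightarrow> real"
  assumes "\<And>t. \<bar>t\<bar> \<le> 2 \<Longrightarrow> \<bar>W t \<omega>\<bar> \<le> B" "inrange p l"
  shows "\<bar>GG W r p l u \<omega>\<bar> \<le> (2 * B) ^ sum_list r"
proof -
  have f: "\<bar>\<Sum>j<2. cc r j * W (tt p l u i j) \<omega>\<bar> \<le> 2 * B" for i
  proof -
    have "\<bar>\<Sum>j<2. cc r j * W (tt p l u i j) \<omega>\<bar> \<le> real (card {..<2::nat}) * B"
    proof (rule abs_sum_le_card)
      fix j :: nat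
      have "\<bar>cc r j * W (tt p l u i j) \<omega>\<bar> = \<bar>cc r j\<bar> * \<bar>W (tt p l u i j) \<omega>\<bar>" by (simp add: abs_mult)
      also have "\<dots> \<le> 1 * B" using cc_bound[of r j] assms(1)[OF tt_bound[OF assms(2)]]
        by (intro mult_mono) auto
      finally show "\<bar>cc r j * W (tt p l u i j) \<omega>\<bar> \<le> B" by simp
    qed
    then show ?thesis by simp
  qed
  have "\<bar>GG W r p l u \<omega>\<bar> = (\<Prod>k<sum_list r. \<bar>\<Sum>j<2. cc r j * W (tt p l u (ix r ! k) j) \<omega>\<bar>)"
    unfolding GG_def by (simp add: abs_prod)
  also have "\<dots> \<le> (\<Prod>k<sum_list r. 2 * B)" by (intro prod_mono) (auto simp: f)
  finally show ?thesis by simp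
qed


lemma GG_split:
  assumes s: "sum_list rA + sum_list rB = 2*a"
  shows "GG W rA p lA (fst w) \<omega> * GG W rB p lB (snd w) \<omega>
     = (\<Prod>k<2*a. \<Sum>j<2. CC rA rB k j * W (TT p lA rA lB rB w k j) \<omega>)"
proof -
  let ?f = "\<lambda>k. \<Sum>j<2. CC rA rB k j * W (TT p lA rA lB rB w k j) \<omega>"
  have "(\<Prod>k<2*a. ?f k) = (\<Prod>k<sum_list rA. ?f k) * (\<Prod>k<sum_list rB. ?f (sum_list rA + k))"
    unfolding s[symmetric] by (rule prod_split)
  also have "(\<Prod>k<sum_list rA. ?f k) = GG W rA p lA (fst w) \<omega>"
    unfolding GG_def by (intro prod.cong refl) (simp add: CC_def TT_def)
  also have "(\<Prod>k<sum_list rB. ?f (sum_list rA + k)) = GG W rB p lB (snd w) \<omega>"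
    unfolding GG_def by (intro prod.cong refl) (simp add: CC_def TT_def)
  finally show ?thesis by simp
qed

lemma GG_meas_Nc:
  assumes c: "continuous_on UNIV (\<lambda>t. W t \<omega>)"
  shows "(\<lambda>u. GG W r p l u \<omega>) \<in> borel_measurable (Nc (length r))"
  unfolding Nc_def using GG_meas[where W=W and \<omega>=\<omega>, OF c] by simp

lemma EF_eq:
  fixes W :: "real \<Rightarrow> 'a \<Rightarrow> real"
  assumes fbm: "is_fBM M H W" and H: "0 \<le> H" "H \<le> 1"
    and vA: "valid rA" and vB: "valid rB" and s: "sum_list rA + sum_list rB = 2*a"
    and iA: "inrange p lA" and iB: "inrange p lB"
  shows "integrable M (\<lambda>\<omega>. frakW W p lA rA \<omega> * frakW W p lB rB \<omega>)"
    and "integral\<^sup>L M (\<lambda>\<omega>. frakW W p lA rA \<omega> * frakW W p lB rB \<omega>) = EF p a H lA rA lB rB"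
proof -
  let ?h = "\<lambda>w \<omega>. \<Prod>k<2*a. \<Sum>j<2. CC rA rB k j * W (TT p lA rA lB rB w k j) \<omega>"
  have Wc: "\<And>\<omega>. \<omega> \<in> space M \<Longrightarrow> continuous_on UNIV (\<lambda>t. W t \<omega>)"
    using fbm unfolding is_fBM_def by auto
  have pw: "frakW W p lA rA \<omega> * frakW W p lB rB \<omega> = fc rA * fc rB * (\<integral>w. ?h w \<omega> \<partial>NN rA rB)"
    if \<omega>: "\<omega> \<in> space M" for \<omega>
  proof -
    obtain B where B: "B \<ge> 0" "\<And>t. \<bar>t\<bar> \<le> 2 \<Longrightarrow> \<bar>W t \<omega>\<bar> \<le> B"
      using W_bound[where W=W and \<omega>=\<omega>, OF Wc[OF \<omega>]] by blast
    have "frakW W p lA rA \<omega> * frakW W p lB rB \<omega>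
        = fc rA * fc rB * (integral\<^sup>L (Nc (length rA)) (\<lambda>u. GG W rA p lA u \<omega>) * integral\<^sup>L (Nc (length rB)) (\<lambda>u. GG W rB p lB u \<omega>))"
      unfolding frakW_eq[where W=W and \<omega>=\<omega>, OF Wc[OF \<omega>] vA] frakW_eq[where W=W and \<omega>=\<omega>, OF Wc[OF \<omega>] vB] fc_def by simp
    also have "integral\<^sup>L (Nc (length rA)) (\<lambda>u. GG W rA p lA u \<omega>) * integral\<^sup>L (Nc (length rB)) (\<lambda>u. GG W rB p lB u \<omega>)
        = (\<integral>w. GG W rA p lA (fst w) \<omega> * GG W rB p lB (snd w) \<omega> \<partial>NN rA rB)"
      unfolding NN_def
      by (rule prod_int[OF prob_Nc prob_Nc GG_meas_Nc[where W=W and \<omega>=\<omega>, OF Wc[OF \<omega>]] GG_meas_Nc[where W=W and \<omega>=\<omega>, OF Wc[OF \<omega>]]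
            GG_bound[where W=W and \<omega>=\<omega>, OF B(2) iA] GG_bound[where W=W and \<omega>=\<omega>, OF B(2) iB]])
    also have "\<dots> = (\<integral>w. ?h w \<omega> \<partial>NN rA rB)"
      by (intro Bochner_Integration.integral_cong refl GG_split[OF s])
    finally show ?thesis .
  qed
  have fN: "finite_measure (NN rA rB)"
    using prob_NN[of rA rB] by (simp add: prob_space_def)
  note im = int_mom[where c="CC rA rB" and \<tau>="TT p lA rA lB rB" and a=a, OF fbm H fN TT_meas CC_bound TT_bound[OF iA iB]]
  show "integrable M (\<lambda>\<omega>. frakW W p lA rA \<omega> * frakW W p lB rB \<omega>)"
  proof -
    have "integrable M (\<lambda>\<omega>. frakW W p lA rA \<omega> * frakW W p lB rB \<omega>) \<longleftrightarrow>
          integrable M (\<lambda>\<omega>. fc rA * fc rB * (\<integral>w. ?h w \<omega> \<partial>NN rA rB))"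
      by (rule Bochner_Integration.integrable_cong[OF refl]) (rule pw)
    then show ?thesis using integrable_mult_right[OF im(2), of "fc rA * fc rB"] by simp
  qed
  have "integral\<^sup>L M (\<lambda>\<omega>. frakW W p lA rA \<omega> * frakW W p lB rB \<omega>)
      = integral\<^sup>L M (\<lambda>\<omega>. fc rA * fc rB * (\<integral>w. ?h w \<omega> \<partial>NN rA rB))"
    using pw by (intro Bochner_Integration.integral_cong) auto
  also have "\<dots> = fc rA * fc rB * (\<integral>\<omega>. (\<integral>w. ?h w \<omega> \<partial>NN rA rB) \<partial>M)" by simp
  also have "\<dots> = EF p a H lA rA lB rB" unfolding EF_def im(3) ..
  finally show "integral\<^sup>L M (\<lambda>\<omega>. frakW W p lA rA \<omega> * frakW W p lB rB \<omega>) = EF p a H lA rA lB rB" .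
qed

lemma qform_meas:
  assumes m: "\<And>k. (\<lambda>w. t w k) \<in> borel_measurable N"
  shows "(\<lambda>w. qform H K d (t w)) \<in> borel_measurable N"
    and "(\<lambda>w. dqform H K d (t w)) \<in> borel_measurable N"
proof -
  have [measurable]: "(\<lambda>w. t w k) \<in> borel_measurable N" for k by (rule m)
  show "(\<lambda>w. qform H K d (t w)) \<in> borel_measurable N"
    unfolding qform_def fbm_cov_def by measurable
  show "(\<lambda>w. dqform H K d (t w)) \<in> borel_measurable N"
    unfolding dqform_def dcov_def dpow_def by measurable
qed

lemma mom_meas:
  assumes m: "\<And>i j. (\<lambda>w. \<tau> w i j) \<in> borel_measurable N"
  shows "(\<lambda>w. mom H a J c (\<tau> w)) \<in> borel_measurable N"
    and "(\<lambda>w. dmom H a J c (\<tau> w)) \<in> borel_measurable N"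
proof -
  have m2: "(\<lambda>w. (\<lambda>(i,j). \<tau> w i j) k) \<in> borel_measurable N" for k
    using m[of "fst k" "snd k"] by (simp add: split_beta)
  have [measurable]: "(\<lambda>w. qform H K d (\<lambda>(i,j). \<tau> w i j)) \<in> borel_measurable N" for K d
    using qform_meas(1)[where t="\<lambda>w. (\<lambda>(i,j). \<tau> w i j)", OF m2] .
  have [measurable]: "(\<lambda>w. dqform H K d (\<lambda>(i,j). \<tau> w i j)) \<in> borel_measurable N" for K d
    using qform_meas(2)[where t="\<lambda>w. (\<lambda>(i,j). \<tau> w i j)", OF m2] .
  show "(\<lambda>w. mom H a J c (\<tau> w)) \<in> borel_measurable N"
    unfolding mom_def by measurable
  show "(\<lambda>w. dmom H a J c (\<tau> w)) \<in> borel_measurable N"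
    unfolding dmom_def by measurable
qed

definition MB :: "nat \<Rightarrow> real" where
  "MB a = 2^(2*a) * (Q0 a ^ a * mfac a) / fact (2*a)"

lemma mom_bound:
  assumes "\<And>i j. \<bar>c i j\<bar> \<le> 1" "\<And>i j. \<bar>\<tau> i j\<bar> \<le> 2" "0 \<le> H" "H \<le> 1"
  shows "\<bar>mom H a (\<lambda>_. {..<2::nat}) c \<tau>\<bar> \<le> MB a"
proof -
  have "\<bar>\<Sum>S\<in>Pow {..<2*a}. (-1)^(2*a - card S) *
       (qform H (Sigma S (\<lambda>_. {..<2::nat})) (\<lambda>(i,j). c i j) (\<lambda>(i,j). \<tau> i j) ^ a * (fact (2*a) / (2^a * fact a)))\<bar>
      \<le> real (card (Pow {..<2*a})) * (Q0 a ^ a * mfac a)"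
  proof (rule abs_sum_le_card)
    fix S assume S: "S \<in> Pow {..<2*a}"
    let ?q = "qform H (Sigma S (\<lambda>_. {..<2::nat})) (\<lambda>(i,j). c i j) (\<lambda>(i,j). \<tau> i j)"
    have q: "\<bar>?q\<bar> \<le> Q0 a" using S assms by (intro qS_bound) auto
    have qa: "\<bar>?q\<bar> ^ a \<le> Q0 a ^ a" using q by (intro power_mono) auto
    have "\<bar>(-1)^(2*a - card S) * (?q ^ a * (fact (2*a) / (2^a * fact a)))\<bar> = \<bar>?q\<bar> ^ a * mfac a"
      using mfac_nonneg[of a] by (simp add: abs_mult power_abs mfac_def)
    also have "\<dots> \<le> Q0 a ^ a * mfac a"
      using qa mfac_nonneg[of a] by (intro mult_right_mono) auto
    finally show "\<bar>(-1)^(2*a - card S) * (?q ^ a * (fact (2*a) / (2^a * fact a)))\<bar> \<le> Q0 a ^ a * mfac a" .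
  qed
  moreover have "card (Pow {..<2*a}) = 2^(2*a)" by (simp add: card_Pow)
  ultimately show ?thesis unfolding mom_def MB_def by (simp add: abs_divide divide_right_mono)
qed

lemma fc_bound: "\<bar>fc r\<bar> \<le> 1"
proof -
  have "prod_list (map fact r) \<noteq> (0::nat)" by (auto simp: prod_list_zero_iff)
  then have "real (prod_list (map fact r)) \<ge> 1" by linarith
  then show ?thesis unfolding fc_def by simp
qed

definition dEF :: "nat \<Rightarrow> nat \<Rightarrow> real \<Rightarrow> int \<Rightarrow> nat list \<Rightarrow> int \<Rightarrow> nat list \<Rightarrow> real" where
  "dEF p a H lA rA lB rB = fc rA * fc rB * (\<integral>w. dmom H a (\<lambda>_. {..<2}) (CC rA rB) (TT p lA rA lB rB w) \<partial>NN rA rB)"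

lemma EF_deriv:
  assumes Hm: "0 < Hm" and Hp: "Hp \<le> 1" and H: "H \<in> {Hm..Hp}"
    and iA: "inrange p lA" and iB: "inrange p lB"
  shows "((\<lambda>H. EF p a H lA rA lB rB) has_real_derivative dEF p a H lA rA lB rB) (at H within {Hm..Hp})"
    and "\<bar>dEF p a H lA rA lB rB\<bar> \<le> DB Hm a"
proof -
  let ?J = "\<lambda>_::nat. {..<2::nat}"
  let ?N = "NN rA rB"
  interpret N: prob_space ?N by (rule prob_NN)
  let ?P = "\<lambda>H w. mom H a ?J (CC rA rB) (TT p lA rA lB rB w)"
  let ?D = "\<lambda>H w. dmom H a ?J (CC rA rB) (TT p lA rA lB rB w)"
  have mP: "?P H \<in> borel_measurable ?N" for H by (rule mom_meas(1)[OF TT_meas])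
  have mD: "?D H \<in> borel_measurable ?N" for H by (rule mom_meas(2)[OF TT_meas])
  have bD: "\<bar>?D H' w\<bar> \<le> DB Hm a" if "H' \<in> {Hm..Hp}" for H' w
    using that Hm Hp by (intro dmom_bound CC_bound TT_bound[OF iA iB]) auto
  have iP: "integrable ?N (?P H')" if "H' \<in> {Hm..Hp}" for H'
  proof (rule N.integrable_const_bound[where B="MB a"])
    show "AE x in ?N. norm (?P H' x) \<le> MB a"
      using that Hm Hp by (intro AE_I2) (auto intro!: mom_bound CC_bound TT_bound[OF iA iB])
  qed (rule mP)
  have iD: "integrable ?N (?D H)"
    using H bD by (intro N.integrable_const_bound[where B="DB Hm a"] AE_I2 mD) auto
  have d: "((\<lambda>H. integral\<^sup>L ?N (?P H)) has_real_derivative integral\<^sup>L ?N (?D H)) (at H within {Hm..Hp})"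
  proof (rule deriv_integral[where K="DB Hm a"])
    show "finite_measure ?N" by (rule N.finite_measure_axioms)
  qed (use mP mD iP bD H mom_deriv in auto)
  show "((\<lambda>H. EF p a H lA rA lB rB) has_real_derivative dEF p a H lA rA lB rB) (at H within {Hm..Hp})"
    unfolding EF_def[abs_def] dEF_def using DERIV_cmult[OF d, of "fc rA * fc rB"] by simp
  have "\<bar>integral\<^sup>L ?N (?D H)\<bar> \<le> (\<integral>w. \<bar>?D H w\<bar> \<partial>?N)" by (rule integral_abs_bound)
  also have "\<dots> \<le> DB Hm a"
    using H bD iD by (intro N.integral_le_const AE_I2) auto
  finally have "\<bar>integral\<^sup>L ?N (?D H)\<bar> \<le> DB Hm a" .
  moreover have "\<bar>fc rA * fc rB\<bar> \<le> 1" using fc_bound[of rA] fc_bound[of rB]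
    by (simp add: abs_mult mult_le_one)
  ultimately have "\<bar>fc rA * fc rB\<bar> * \<bar>integral\<^sup>L ?N (?D H)\<bar> \<le> 1 * DB Hm a"
    by (intro mult_mono) auto
  then show "\<bar>dEF p a H lA rA lB rB\<bar> \<le> DB Hm a"
    unfolding dEF_def by (simp add: abs_mult)
qed

definition coef :: "nat list \<Rightarrow> nat list \<Rightarrow> real" where
  "coef r1 r2 = (-1) ^ (length r1 + length r2) / (real (length r1) * real (length r2))"

definition Kf :: "nat \<Rightarrow> nat \<Rightarrow> real \<Rightarrow> real" where
  "Kf p a H = 2 powr (- 2 * real p) *
    (\<Sum>l\<in>{- (2^p - 1) .. 2^p - 1 :: int}. (2^p - \<bar>of_int l\<bar>) *
      (\<Sum>(r1, r2)\<in>kappa_idx a. coef r1 r2 *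
         (EF p a H (2^p) r1 (2^p + l) r2 - EF p a H (2^p) r1 l r2 - EF p a H 0 r1 (2^p + l) r2 + EF p a H 0 r1 l r2)))"

definition dKf :: "nat \<Rightarrow> nat \<Rightarrow> real \<Rightarrow> real" where
  "dKf p a H = 2 powr (- 2 * real p) *
    (\<Sum>l\<in>{- (2^p - 1) .. 2^p - 1 :: int}. (2^p - \<bar>of_int l\<bar>) *
      (\<Sum>(r1, r2)\<in>kappa_idx a. coef r1 r2 *
         (dEF p a H (2^p) r1 (2^p + l) r2 - dEF p a H (2^p) r1 l r2 - dEF p a H 0 r1 (2^p + l) r2 + dEF p a H 0 r1 l r2)))"

lemma inrange_facts:
  assumes "l \<in> {- (2^p - 1) .. 2^p - 1 :: int}"
  shows "inrange p (2^p)" "inrange p 0" "inrange p (2^p + l)" "inrange p l"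
  using assms unfolding inrange_def by auto

lemma idx_facts:
  assumes "(r1, r2) \<in> kappa_idx a"
  shows "valid r1" "valid r2" "sum_list r1 + sum_list r2 = 2*a"
  using assms unfolding kappa_idx_def valid_def by auto

lemma coef_bound: "\<bar>coef r1 r2\<bar> \<le> 1"
proof -
  have "\<bar>coef r1 r2\<bar> = 1 / (real (length r1) * real (length r2))"
    unfolding coef_def by (simp add: abs_divide abs_mult)
  also have "\<dots> \<le> 1"
  proof (cases "length r1 = 0 \<or> length r2 = 0")
    case False
    then have "real (length r1) * real (length r2) \<ge> 1"
      by (metis One_nat_def of_nat_1 of_nat_le_iff of_nat_mult less_one not_le nat_mult_eq_1_iff nat_one_le_power mult_eq_0_iff linorder_not_le)
    then show ?thesis by simp
  qed auto
  finally show ?thesis .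
qed

lemma kappa_eq:
  fixes M :: "real \<Rightarrow> 'a measure" and W :: "real \<Rightarrow> real \<Rightarrow> 'a \<Rightarrow> real"
  assumes fbm: "is_fBM (M H) H (W H)" and H: "0 \<le> H" "H \<le> 1"
  shows "kappa M W p a H = Kf p a H"
  unfolding kappa_def Kf_def
proof (intro arg_cong[where f="\<lambda>x. _ * x"] sum.cong refl arg_cong[where f="\<lambda>x. _ * x"], clarify)
  fix l r1 r2
  assume l: "l \<in> {- (2^p - 1) .. 2^p - 1 :: int}" and r: "(r1, r2) \<in> kappa_idx a"
  note i = inrange_facts[OF l] and v = idx_facts[OF r]
  let ?F = "\<lambda>l r \<omega>. frakW (W H) p l r \<omega>"
  have I1: "integrable (M H) (\<lambda>\<omega>. ?F (2^p) r1 \<omega> * ?F (2^p + l) r2 \<omega>)"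
    and E1: "integral\<^sup>L (M H) (\<lambda>\<omega>. ?F (2^p) r1 \<omega> * ?F (2^p + l) r2 \<omega>) = EF p a H (2^p) r1 (2^p + l) r2"
    using EF_eq[OF fbm H v i(1) i(3)] by auto
  have I2: "integrable (M H) (\<lambda>\<omega>. ?F (2^p) r1 \<omega> * ?F l r2 \<omega>)"
    and E2: "integral\<^sup>L (M H) (\<lambda>\<omega>. ?F (2^p) r1 \<omega> * ?F l r2 \<omega>) = EF p a H (2^p) r1 l r2"
    using EF_eq[OF fbm H v i(1) i(4)] by auto
  have I3: "integrable (M H) (\<lambda>\<omega>. ?F 0 r1 \<omega> * ?F (2^p + l) r2 \<omega>)"
    and E3: "integral\<^sup>L (M H) (\<lambda>\<omega>. ?F 0 r1 \<omega> * ?F (2^p + l) r2 \<omega>) = EF p a H 0 r1 (2^p + l) r2"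
    using EF_eq[OF fbm H v i(2) i(3)] by auto
  have I4: "integrable (M H) (\<lambda>\<omega>. ?F 0 r1 \<omega> * ?F l r2 \<omega>)"
    and E4: "integral\<^sup>L (M H) (\<lambda>\<omega>. ?F 0 r1 \<omega> * ?F l r2 \<omega>) = EF p a H 0 r1 l r2"
    using EF_eq[OF fbm H v i(2) i(4)] by auto
  have eq: "(\<lambda>\<omega>. (?F (2^p) r1 \<omega> - ?F 0 r1 \<omega>) * (?F (2^p + l) r2 \<omega> - ?F l r2 \<omega>))
     = (\<lambda>\<omega>. ((?F (2^p) r1 \<omega> * ?F (2^p + l) r2 \<omega> - ?F (2^p) r1 \<omega> * ?F l r2 \<omega>)
              - ?F 0 r1 \<omega> * ?F (2^p + l) r2 \<omega>) + ?F 0 r1 \<omega> * ?F l r2 \<omega>)"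
    by (simp add: fun_eq_iff algebra_simps)
  have "integral\<^sup>L (M H) (\<lambda>\<omega>. (?F (2^p) r1 \<omega> - ?F 0 r1 \<omega>) * (?F (2^p + l) r2 \<omega> - ?F l r2 \<omega>))
      = EF p a H (2^p) r1 (2^p + l) r2 - EF p a H (2^p) r1 l r2 - EF p a H 0 r1 (2^p + l) r2 + EF p a H 0 r1 l r2"
    unfolding eq
    by (simp add: Bochner_Integration.integral_add Bochner_Integration.integral_diff I1 I2 I3 I4 E1 E2 E3 E4)
  then show "(-1) ^ (length r1 + length r2) / (real (length r1) * real (length r2)) *
       integral\<^sup>L (M H) (\<lambda>\<omega>. (frakW (W H) p (2^p) r1 \<omega> - frakW (W H) p 0 r1 \<omega>) * (frakW (W H) p (2^p + l) r2 \<omega> - frakW (W H) p l r2 \<omega>))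
     = coef r1 r2 * (EF p a H (2^p) r1 (2^p + l) r2 - EF p a H (2^p) r1 l r2 - EF p a H 0 r1 (2^p + l) r2 + EF p a H 0 r1 l r2)"
    unfolding coef_def by simp
qed


lemma Kf_deriv:
  assumes Hm: "0 < Hm" and Hp: "Hp \<le> 1" and H: "H \<in> {Hm..Hp}"
  shows "(Kf p a has_real_derivative dKf p a H) (at H within {Hm..Hp})"
  unfolding Kf_def[abs_def] dKf_def
proof (intro DERIV_cmult DERIV_sum, clarify)
  fix l r1 r2
  assume l: "l \<in> {- (2^p - 1) .. 2^p - 1 :: int}"
  note i = inrange_facts[OF l]
  note d = EF_deriv(1)[OF Hm Hp H]
  show "((\<lambda>x. coef r1 r2 * (EF p a x (2^p) r1 (2^p + l) r2 - EF p a x (2^p) r1 l r2 - EF p a x 0 r1 (2^p + l) r2 + EF p a x 0 r1 l r2))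
     has_real_derivative coef r1 r2 * (dEF p a H (2^p) r1 (2^p + l) r2 - dEF p a H (2^p) r1 l r2 - dEF p a H 0 r1 (2^p + l) r2 + dEF p a H 0 r1 l r2))
     (at H within {Hm..Hp})"
    by (intro DERIV_cmult DERIV_add DERIV_diff d i)
qed

lemma card_lrange: "real (card {- (2^p - 1) .. 2^p - 1 :: int}) \<le> 2 * 2^p"
proof -
  have "card {- (2^p - 1) .. 2^p - 1 :: int} = nat (2 * 2^p - 1)" by simp
  also have "\<dots> \<le> 2 * 2^p" by (simp add: nat_le_iff)
  finally show ?thesis by (metis of_nat_le_iff of_nat_mult of_nat_numeral of_nat_power)
qed

lemma dKf_bound:
  assumes Hm: "0 < Hm" and Hp: "Hp \<le> 1" and H: "H \<in> {Hm..Hp}"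
  shows "\<bar>dKf p a H\<bar> \<le> 8 * real (card (kappa_idx a)) * DB Hm a"
proof -
  let ?C = "real (card (kappa_idx a)) * (4 * DB Hm a)"
  have DBnn: "DB Hm a \<ge> 0" unfolding DB_def using Q0_nonneg[of a] Q1_nonneg[OF Hm, of a] mfac_nonneg[of a]
    by (intro divide_nonneg_pos mult_nonneg_nonneg zero_le_power) auto
  have inner: "\<bar>\<Sum>(r1, r2)\<in>kappa_idx a. coef r1 r2 *
         (dEF p a H (2^p) r1 (2^p + l) r2 - dEF p a H (2^p) r1 l r2 - dEF p a H 0 r1 (2^p + l) r2 + dEF p a H 0 r1 l r2)\<bar>
      \<le> ?C" if l: "l \<in> {- (2^p - 1) .. 2^p - 1 :: int}" for l
  proof (rule abs_sum_le_card, clarify)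
    fix r1 r2
    note i = inrange_facts[OF l]
    note b = EF_deriv(2)[OF Hm Hp H]
    have "\<bar>dEF p a H (2^p) r1 (2^p + l) r2 - dEF p a H (2^p) r1 l r2 - dEF p a H 0 r1 (2^p + l) r2 + dEF p a H 0 r1 l r2\<bar>
        \<le> 4 * DB Hm a"
      using b[OF i(1) i(3), where a=a and rA=r1 and rB=r2] b[OF i(1) i(4), where a=a and rA=r1 and rB=r2]
        b[OF i(2) i(3), where a=a and rA=r1 and rB=r2] b[OF i(2) i(4), where a=a and rA=r1 and rB=r2]
      by linarith
    then have "\<bar>coef r1 r2\<bar> * \<bar>dEF p a H (2^p) r1 (2^p + l) r2 - dEF p a H (2^p) r1 l r2 - dEF p a H 0 r1 (2^p + l) r2 + dEF p a H 0 r1 l r2\<bar>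
        \<le> 1 * (4 * DB Hm a)"
      using coef_bound[of r1 r2] by (intro mult_mono) auto
    then show "\<bar>coef r1 r2 * (dEF p a H (2^p) r1 (2^p + l) r2 - dEF p a H (2^p) r1 l r2 - dEF p a H 0 r1 (2^p + l) r2 + dEF p a H 0 r1 l r2)\<bar>
        \<le> 4 * DB Hm a" by (simp add: abs_mult)
  qed
  have outer: "\<bar>\<Sum>l\<in>{- (2^p - 1) .. 2^p - 1 :: int}. (2^p - \<bar>of_int l\<bar>) *
      (\<Sum>(r1, r2)\<in>kappa_idx a. coef r1 r2 *
         (dEF p a H (2^p) r1 (2^p + l) r2 - dEF p a H (2^p) r1 l r2 - dEF p a H 0 r1 (2^p + l) r2 + dEF p a H 0 r1 l r2))\<bar>
      \<le> real (card {- (2^p - 1) .. 2^p - 1 :: int}) * (2^p * ?C)"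
  proof (rule abs_sum_le_card)
    fix l assume l: "l \<in> {- (2^p - 1) .. 2^p - 1 :: int}"
    have w: "\<bar>(2::real)^p - \<bar>of_int l\<bar>\<bar> \<le> 2^p"
    proof -
      have "\<bar>l\<bar> \<le> 2^p" using l by auto
      then have "\<bar>real_of_int l\<bar> \<le> 2^p" by (metis of_int_abs of_int_le_iff of_int_numeral of_int_power)
      then show ?thesis by auto
    qed
    show "\<bar>(2^p - \<bar>of_int l\<bar>) * (\<Sum>(r1, r2)\<in>kappa_idx a. coef r1 r2 *
         (dEF p a H (2^p) r1 (2^p + l) r2 - dEF p a H (2^p) r1 l r2 - dEF p a H 0 r1 (2^p + l) r2 + dEF p a H 0 r1 l r2))\<bar>
      \<le> 2^p * ?C"
      unfolding abs_mult using w inner[OF l] by (intro mult_mono) auto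
  qed
  have Cnn: "?C \<ge> 0" using DBnn by simp
  have "\<bar>dKf p a H\<bar> \<le> 2 powr (- 2 * real p) * (real (card {- (2^p - 1) .. 2^p - 1 :: int}) * (2^p * ?C))"
  proof -
    have "\<bar>(2::real) powr (- 2 * real p)\<bar> = 2 powr (- 2 * real p)" by simp
    then show ?thesis unfolding dKf_def abs_mult using outer by (simp add: mult_left_mono)
  qed
  also have "\<dots> \<le> 2 powr (- 2 * real p) * ((2 * 2^p) * (2^p * ?C))"
    using card_lrange[of p] Cnn by (intro mult_left_mono mult_right_mono) auto
  also have "2 powr (- 2 * real p) * ((2 * 2^p) * (2^p * ?C)) = 2 * ?C"
  proof -
    have "(2::real) powr (- 2 * real p) * (2^p * 2^p) = 1"
      by (simp add: powr_minus powr_realpow[symmetric] powr_add[symmetric] field_simps)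
    then show ?thesis by (simp add: algebra_simps)
  qed
  finally show ?thesis by simp
qed

theorem lemma2:
  fixes Hm Hp :: real
    and M :: "real \<Rightarrow> 'a measure" and W :: "real \<Rightarrow> real \<Rightarrow> 'a \<Rightarrow> real"
  assumes "0 < Hm" and "Hm \<le> Hp" and "Hp < 3/4"
    and fbm: "\<forall>H\<in>{Hm..Hp}. is_fBM (M H) H (W H)"
  shows "\<forall>a::nat. a \<ge> 1 \<longrightarrow>
           (\<forall>p::nat. kappa M W p a differentiable_on {Hm..Hp}) \<and>
           (\<exists>c::real. \<forall>p::nat. \<forall>H\<in>{Hm..Hp}. \<exists>D.
               (kappa M W p a has_real_derivative D) (at H within {Hm..Hp}) \<and> \<bar>D\<bar> \<le> c)"
proof (intro allI impI)
  fix a :: nat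
  have Hm: "0 < Hm" and Hp: "Hp \<le> 1" using assms by auto
  have der: "(kappa M W p a has_real_derivative dKf p a H) (at H within {Hm..Hp})"
    if H: "H \<in> {Hm..Hp}" for p H
  proof (rule has_field_derivative_transform_within[OF Kf_deriv[OF Hm Hp H] zero_less_one H])
    fix x assume x: "x \<in> {Hm..Hp}"
    then have "is_fBM (M x) x (W x)" using fbm by blast
    then show "Kf p a x = kappa M W p a x"
      using kappa_eq[where M=M and W=W and H=x] x Hm Hp by auto
  qed
  show "(\<forall>p::nat. kappa M W p a differentiable_on {Hm..Hp}) \<and>
           (\<exists>c::real. \<forall>p::nat. \<forall>H\<in>{Hm..Hp}. \<exists>D.
               (kappa M W p a has_real_derivative D) (at H within {Hm..Hp}) \<and> \<bar>D\<bar> \<le> c)"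
  proof
    show "\<forall>p::nat. kappa M W p a differentiable_on {Hm..Hp}"
      unfolding differentiable_on_def
    proof (intro allI ballI)
      fix p x assume x: "x \<in> {Hm..Hp}"
      show "kappa M W p a differentiable at x within {Hm..Hp}"
        using differentiableI[OF der[OF x, unfolded has_field_derivative_def]] .
    qed
    show "\<exists>c::real. \<forall>p::nat. \<forall>H\<in>{Hm..Hp}. \<exists>D.
               (kappa M W p a has_real_derivative D) (at H within {Hm..Hp}) \<and> \<bar>D\<bar> \<le> c"
      using der dKf_bound[OF Hm Hp] by blast
  qed
qed

end
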